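(* Fix $0<q<1$. Let $I$ be one of $[0,\infty)$, $[0,a]$, $[\alpha,1]$ ($\alpha<0$), with Jackson integrals $\int_0^\infty F\,d_qx=(1-q)\sum_{s\in\mathbb{Z}}q^sF(q^s)$, $\int_0^aF\,d_qx=(1-q)\sum_{n\ge0}aq^nF(aq^n)$, $\int_\alpha^1=\int_0^1-\int_0^\alpha$. Let $\rho(x;q)$ be a weight with finite moments, and $f,g$ polynomials with $\deg f\le2$, $\deg g\le1$, satisfying $\rho(qx)f(qx)=\rho(x)(f(x)-q^{-1/2}(1-q)xg(x))$ at lattice points, with $f\rho$ vanishing at the end points of the support. Let $\{p_n(x;q)\}$ be the monic polynomials with $\int_Ip_mp_n\rho\,d_qx=\tilde h_n\delta_{nm}$, $\tilde h_n\ne0$; let $\mathcal{A}_q=q^{-1/2}g(x)T_q+q^{-1}f(x)D_{q^{-1}}+f(x)D_q$ and $c_n(q):=-\int_Ip_{n+1}(x;q)(\mathcal{A}_qp_n)(x;q)\rho(x;q)\,d_qx$. Let $\omega(x;q)=f(qx;q)\rho(qx;q)$, $\langle\phi,\psi\rangle_{s,\omega}=\int_I(\phi D_q\psi-\psi D_q\phi)\omega\,d_qx$, and assume $\mathrm{Pf}[\langle x^i,x^j\rangle_{s,\omega}]_{i,j=0}^{2n-1}\ne0$ for all $n\ge1$. Then the polynomials $$Q_{2n+1}(x;q)=p_{2n+1}(x;q),\qquad Q_{2n}(x;q)=\sum_{l=0}^n\Big(\prod_{j=l}^{n-1}\frac{c_{2j+1}(q)}{c_{2j}(q)}\Big)p_{2l}(x;q)$$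 (which, when all $c_{2j+1}(q)\ne0$, equals $\big(\prod_{j=0}^{n-1}\frac{c_{2j+1}(q)}{c_{2j}(q)}\big)\sum_{l=0}^n\prod_{j=0}^{l-1}\frac{c_{2j}(q)}{c_{2j+1}(q)}p_{2l}(x;q)$) are monic $q$-skew orthogonal polynomials for $\langle\cdot,\cdot\rangle_{s,\omega}$: $\langle Q_{2n},Q_{2m+1}\rangle_{s,\omega}=-\langle Q_{2m+1},Q_{2n}\rangle_{s,\omega}=u_n(q)\delta_{nm}$, $\langle Q_{2m},Q_{2n}\rangle_{s,\omega}=\langle Q_{2m+1},Q_{2n+1}\rangle_{s,\omega}=0$, with $u_n(q)=c_{2n}(q)$. Moreover $p_{2n+1}=Q_{2n+1}$ and $p_{2n}(x;q)=Q_{2n}(x;q)-\frac{c_{2n-1}(q)}{c_{2n-2}(q)}Q_{2n-2}(x;q)$ for $n\ge1$.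
   Context: $T_q\phi(x)=\phi(qx)$, $D_q\phi(x)=\frac{\phi(x)-\phi(qx)}{(1-q)x}$, $D_{q^{-1}}\phi(x)=\frac{\phi(x)-\phi(q^{-1}x)}{(1-q^{-1})x}$. Polynomials have coefficients in $\mathbb{R}(q)$. Skew orthogonal polynomials are unique only up to $Q_{2m+1}\mapsto Q_{2m+1}+\gamma Q_{2m}$. *)

theory Defs
  imports "HOL-Analysis.Analysis" "HOL-Computational_Algebra.Polynomial"
    "HOL-Combinatorics.Permutations"
begin

datatype qinterval = HalfLine | ZeroTo real | AlphaToOne real

definition valid_qinterval :: "qinterval \<Rightarrow> bool" where
  "valid_qinterval I = (case I of HalfLine \<Rightarrow> True | ZeroTo a \<Rightarrow> a > 0 | AlphaToOne \<alpha> \<Rightarrow> \<alpha> < 0)"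

definition jint0 :: "real \<Rightarrow> real \<Rightarrow> (real \<Rightarrow> real) \<Rightarrow> real" where
  "jint0 q a F = (1 - q) * (\<Sum>\<^sub>\<infinity>n\<in>(UNIV::nat set). a * q ^ n * F (a * q ^ n))"

fun jint :: "real \<Rightarrow> qinterval \<Rightarrow> (real \<Rightarrow> real) \<Rightarrow> real" where
  "jint q HalfLine F = (1 - q) * (\<Sum>\<^sub>\<infinity>s\<in>(UNIV::int set). q powi s * F (q powi s))"
| "jint q (ZeroTo a) F = jint0 q a F"
| "jint q (AlphaToOne \<alpha>) F = jint0 q 1 F - jint0 q \<alpha> F"

text \<open>Jackson integrability (the defining sums converge absolutely).\<close>
definition jint0_integrable :: "real \<Rightarrow> real \<Rightarrow> (real \<Rightarrow> real) \<Rightarrow> bool" where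
  "jint0_integrable q a F = ((\<lambda>n::nat. a * q ^ n * F (a * q ^ n)) summable_on UNIV)"

fun jint_integrable :: "real \<Rightarrow> qinterval \<Rightarrow> (real \<Rightarrow> real) \<Rightarrow> bool" where
  "jint_integrable q HalfLine F = ((\<lambda>s::int. q powi s * F (q powi s)) summable_on UNIV)"
| "jint_integrable q (ZeroTo a) F = jint0_integrable q a F"
| "jint_integrable q (AlphaToOne \<alpha>) F = (jint0_integrable q 1 F \<and> jint0_integrable q \<alpha> F)"

fun qlattice :: "real \<Rightarrow> qinterval \<Rightarrow> real set" where
  "qlattice q HalfLine = range (\<lambda>s::int. q powi s)"
| "qlattice q (ZeroTo a) = range (\<lambda>n::nat. a * q ^ n)"
| "qlattice q (AlphaToOne \<alpha>) = range (\<lambda>n::nat. q ^ n) \<union> range (\<lambda>n::nat. \<alpha> * q ^ n)"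

text \<open>For [\<alpha>,1], the point 0 is interior: there we require that the limits along the
  two half-lattices exist and coincide.\<close>
fun vanishes_at_ends :: "real \<Rightarrow> qinterval \<Rightarrow> (real \<Rightarrow> real) \<Rightarrow> bool" where
  "vanishes_at_ends q HalfLine F =
     (((\<lambda>n::nat. F (q ^ n)) \<longlonglongrightarrow> 0) \<and> ((\<lambda>n::nat. F (inverse q ^ n)) \<longlonglongrightarrow> 0))"
| "vanishes_at_ends q (ZeroTo a) F = (F a = 0 \<and> ((\<lambda>n::nat. F (a * q ^ n)) \<longlonglongrightarrow> 0))"
| "vanishes_at_ends q (AlphaToOne \<alpha>) F = (F 1 = 0 \<and> F \<alpha> = 0 \<and>
     (\<exists>L. ((\<lambda>n::nat. F (q ^ n)) \<longlonglongrightarrow> L) \<and> ((\<lambda>n::nat. F (\<alpha> * q ^ n)) \<longlonglongrightarrow> L)))"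

definition Tq :: "real \<Rightarrow> (real \<Rightarrow> real) \<Rightarrow> real \<Rightarrow> real" where
  "Tq q \<phi> x = \<phi> (q * x)"

definition Dq :: "real \<Rightarrow> (real \<Rightarrow> real) \<Rightarrow> real \<Rightarrow> real" where
  "Dq q \<phi> x = (\<phi> x - \<phi> (q * x)) / ((1 - q) * x)"

definition Dqinv :: "real \<Rightarrow> (real \<Rightarrow> real) \<Rightarrow> real \<Rightarrow> real" where
  "Dqinv q \<phi> x = (\<phi> x - \<phi> (inverse q * x)) / ((1 - inverse q) * x)"

definition Aq :: "real \<Rightarrow> real poly \<Rightarrow> real poly \<Rightarrow> (real \<Rightarrow> real) \<Rightarrow> real \<Rightarrow> real" where
  "Aq q f g \<phi> x = q powr (-1/2) * poly g x * Tq q \<phi> x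
      + inverse q * poly f x * Dqinv q \<phi> x + poly f x * Dq q \<phi> x"

definition ccoef :: "real \<Rightarrow> qinterval \<Rightarrow> real poly \<Rightarrow> real poly \<Rightarrow> (real \<Rightarrow> real) \<Rightarrow> (nat \<Rightarrow> real poly) \<Rightarrow> nat \<Rightarrow> real" where
  "ccoef q I f g \<rho> p n = - jint q I (\<lambda>x. poly (p (Suc n)) x * Aq q f g (poly (p n)) x * \<rho> x)"

definition skew_ip :: "real \<Rightarrow> qinterval \<Rightarrow> (real \<Rightarrow> real) \<Rightarrow> (real \<Rightarrow> real) \<Rightarrow> (real \<Rightarrow> real) \<Rightarrow> real" where
  "skew_ip q I \<omega> \<phi> \<psi> = jint q I (\<lambda>x. (\<phi> x * Dq q \<psi> x - \<psi> x * Dq q \<phi> x) * \<omega> x)"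

definition pfaffian :: "(nat \<Rightarrow> nat \<Rightarrow> real) \<Rightarrow> nat \<Rightarrow> real" where
  "pfaffian A n = (1 / (2 ^ n * fact n)) *
     (\<Sum>\<sigma> | \<sigma> permutes {0..<2*n}. of_int (sign \<sigma>) * (\<Prod>i<n. A (\<sigma> (2*i)) (\<sigma> (2*i+1))))"

definition Qpoly :: "(nat \<Rightarrow> real) \<Rightarrow> (nat \<Rightarrow> real poly) \<Rightarrow> nat \<Rightarrow> real poly" where
  "Qpoly c p k = (if odd k then p k else
     (\<Sum>l\<le>k div 2. smult (\<Prod>j\<in>{l..<k div 2}. c (2*j+1) / c (2*j)) (p (2*l))))"

end

theory Submission
  imports Defs
begin


lemma summable_on_sum_fin:
  fixes F :: "'i \<Rightarrow> 'a \<Rightarrow> real"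
  assumes "finite K" "\<And>k. k \<in> K \<Longrightarrow> F k summable_on A"
  shows "(\<lambda>x. \<Sum>k\<in>K. F k x) summable_on A"
  using assms
proof (induction K rule: finite_induct)
  case empty then show ?case by simp
next
  case (insert k K)
  then show ?case by (simp add: summable_on_add)
qed

lemma infsum_sum_fin:
  fixes F :: "'i \<Rightarrow> 'a \<Rightarrow> real"
  assumes "finite K" "\<And>k. k \<in> K \<Longrightarrow> F k summable_on A"
  shows "infsum (\<lambda>x. \<Sum>k\<in>K. F k x) A = (\<Sum>k\<in>K. infsum (F k) A)"
  using assms
proof (induction K rule: finite_induct)
  case empty then show ?case by simp
next
  case (insert k K)
  then show ?case by (simp add: infsum_add summable_on_sum_fin)
qed

lemma tele_nat:
  fixes T E :: "nat \<Rightarrow> real"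
  assumes "T summable_on UNIV" "\<And>n. T n = E n - E (Suc n)" "E \<longlonglongrightarrow> c"
  shows "infsum T UNIV = E 0 - c"
proof -
  have "T sums infsum T UNIV" by (rule has_sum_imp_sums) (simp add: assms)
  moreover have "T = (\<lambda>n. E n - E (Suc n))" using assms(2) by (intro ext) simp
  then have "T sums (E 0 - c)" using telescope_sums'[OF assms(3)] by simp
  ultimately show ?thesis using sums_unique2 by blast
qed

lemma tele_int:
  fixes T E :: "int \<Rightarrow> real"
  assumes T: "T summable_on UNIV" and TE: "\<And>s. T s = E s - E (s + 1)"
    and l1: "(\<lambda>n. E (int n)) \<longlonglongrightarrow> 0" and l2: "(\<lambda>n. E (- int n)) \<longlonglongrightarrow> 0"
  shows "infsum T UNIV = 0"
proof -
  define A where "A = range (int :: nat \<Rightarrow> int)"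
  define h where "h = (\<lambda>n::nat. - int n - 1)"
  define B where "B = range h"
  have AB1: "A \<inter> B = {}" unfolding A_def B_def h_def by auto
  have AB2: "A \<union> B = UNIV"
  proof (intro set_eqI iffI)
    fix s :: int
    show "s \<in> A \<union> B"
    proof (cases "s \<ge> 0")
      case True
      then have "s = int (nat s)" by simp
      then show ?thesis unfolding A_def by blast
    next
      case False
      then have "s = h (nat (- s - 1))" unfolding h_def by simp
      then show ?thesis unfolding B_def by blast
    qed
  qed simp
  note AB = AB1 AB2
  have sA: "T summable_on A" and sB: "T summable_on B"
    using T summable_on_subset_banach by blast+
  have "infsum T UNIV = infsum T A + infsum T B"
    using infsum_Un_disjoint[OF sA sB AB(1)] AB(2) by simp
  moreover have "infsum T A = E 0"
  proof -
    have inj: "inj_on (int :: nat \<Rightarrow> int) UNIV" by (simp add: inj_on_def)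
    have "infsum T A = infsum (T \<circ> int) UNIV" unfolding A_def using infsum_reindex[OF inj] by simp
    also have "\<dots> = E (int 0) - 0"
    proof (rule tele_nat[where E = "\<lambda>n. E (int n)"])
      show "(T \<circ> int) summable_on UNIV" using sA summable_on_reindex[OF inj, of T] unfolding A_def by simp
      show "\<And>n. (T \<circ> int) n = E (int n) - E (int (Suc n))" using TE by (simp add: add.commute)
      show "(\<lambda>n. E (int n)) \<longlonglongrightarrow> 0" using l1 by simp
    qed
    finally show ?thesis by simp
  qed
  moreover have "infsum T B = - E 0"
  proof -
    have inj: "inj_on h UNIV" by (simp add: inj_on_def h_def)
    have sh: "(T \<circ> h) summable_on UNIV" using sB summable_on_reindex[OF inj, of T] unfolding B_def by simp
    have "infsum T B = infsum (T \<circ> h) UNIV" unfolding B_def using infsum_reindex[OF inj] by simp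
    also have "\<dots> = - infsum (\<lambda>n. - (T \<circ> h) n) UNIV" by (simp add: infsum_uminus comp_def)
    also have "infsum (\<lambda>n. - (T \<circ> h) n) UNIV = E (- int 0) - 0"
    proof (rule tele_nat[where E = "\<lambda>n. E (- int n)"])
      show "(\<lambda>n. - (T \<circ> h) n) summable_on UNIV" using sh summable_on_uminus[of "T \<circ> h"] by simp
      show "\<And>n. - (T \<circ> h) n = E (- int n) - E (- int (Suc n))"
        by (simp add: TE h_def) (rule arg_cong[where f=E], simp)
      show "(\<lambda>n. E (- int n)) \<longlonglongrightarrow> 0" using l2 by simp
    qed
    finally show ?thesis by simp
  qed
  ultimately show ?thesis by simp
qed


section \<open>Jackson integral generics\<close>

lemma jint0_cong:
  assumes "a \<noteq> 0" "q > 0" "\<And>x. x \<noteq> 0 \<Longrightarrow> F x = G x"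
  shows "jint0 q a F = jint0 q a G"
proof -
  have nz: "\<And>n. a*q^n \<noteq> 0" using assms by simp
  have "(\<lambda>n. a*q^n*F(a*q^n)) = (\<lambda>n. a*q^n*G(a*q^n))" by (rule ext) (simp add: assms(3)[OF nz])
  then show ?thesis unfolding jint0_def by simp
qed

lemma jint0_integrable_cong:
  assumes "a \<noteq> 0" "q > 0" "\<And>x. x \<noteq> 0 \<Longrightarrow> F x = G x"
  shows "jint0_integrable q a F = jint0_integrable q a G"
proof -
  have nz: "\<And>n. a*q^n \<noteq> 0" using assms by simp
  have "(\<lambda>n. a*q^n*F(a*q^n)) = (\<lambda>n. a*q^n*G(a*q^n))" by (rule ext) (simp add: assms(3)[OF nz])
  then show ?thesis unfolding jint0_integrable_def by simp
qed

lemma jint0_add: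
  assumes "jint0_integrable q a F" "jint0_integrable q a G"
  shows "jint0 q a (\<lambda>x. F x + G x) = jint0 q a F + jint0 q a G"
  using assms unfolding jint0_def jint0_integrable_def
  by (simp add: distrib_left infsum_add)

lemma jint0_integrable_add:
  assumes "jint0_integrable q a F" "jint0_integrable q a G"
  shows "jint0_integrable q a (\<lambda>x. F x + G x)"
  using assms unfolding jint0_integrable_def
  by (simp add: distrib_left summable_on_add)

lemma jint0_cmult: "jint0 q a (\<lambda>x. c * F x) = c * jint0 q a F"
proof -
  have "(\<Sum>\<^sub>\<infinity>n. a * q ^ n * (c * F (a * q ^ n))) = (\<Sum>\<^sub>\<infinity>n. c * (a * q ^ n * F (a * q ^ n)))"
    by (simp add: algebra_simps)
  also have "\<dots> = c * (\<Sum>\<^sub>\<infinity>n. a * q ^ n * F (a * q ^ n))" by (rule infsum_cmult_right')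
  finally show ?thesis unfolding jint0_def by simp
qed

lemma jint0_integrable_cmult:
  assumes "jint0_integrable q a F"
  shows "jint0_integrable q a (\<lambda>x. c * F x)"
proof -
  have "(\<lambda>n. c * (a * q ^ n * F (a * q ^ n))) summable_on UNIV"
    using assms unfolding jint0_integrable_def by (rule summable_on_cmult_right)
  then show ?thesis unfolding jint0_integrable_def by (simp add: algebra_simps)
qed

lemma hl_cmult: "jint q HalfLine (\<lambda>x. c * F x) = c * jint q HalfLine F"
proof -
  have "(\<lambda>s. q powi s * (c * F (q powi s))) = (\<lambda>s. c * (q powi s * F (q powi s)))"
    by (rule ext) (simp add: algebra_simps)
  then have calc: "(\<Sum>\<^sub>\<infinity>s. q powi s * (c * F (q powi s))) = c * (\<Sum>\<^sub>\<infinity>s. q powi s * F (q powi s))"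
    using infsum_cmult_right' by metis
  show ?thesis unfolding jint.simps calc by (rule mult.left_commute)
qed

lemma hl_integrable_cmult:
  assumes "jint_integrable q HalfLine F"
  shows "jint_integrable q HalfLine (\<lambda>x. c * F x)"
proof -
  have e: "(\<lambda>s. q powi s * (c * F (q powi s))) = (\<lambda>s. c * (q powi s * F (q powi s)))"
    by (rule ext) (simp add: algebra_simps)
  have "(\<lambda>s. c * (q powi s * F (q powi s))) summable_on UNIV"
    using assms by (simp add: summable_on_cmult_right)
  then show ?thesis unfolding jint_integrable.simps e .
qed

lemma hl_cong:
  assumes "q > 0" "\<And>x. x \<noteq> 0 \<Longrightarrow> F x = G x"
  shows "jint q HalfLine F = jint q HalfLine G" and "jint_integrable q HalfLine F = jint_integrable q HalfLine G"
proof -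
  have nz: "\<And>s. q powi s \<noteq> 0" using assms by simp
  have "(\<lambda>s. q powi s * F (q powi s)) = (\<lambda>s. q powi s * G (q powi s))" by (rule ext) (simp add: assms(2)[OF nz])
  then show "jint q HalfLine F = jint q HalfLine G" and "jint_integrable q HalfLine F = jint_integrable q HalfLine G"
    by simp_all
qed

lemma jint_cong:
  assumes "valid_qinterval I" "q > 0" "\<And>x. x \<noteq> 0 \<Longrightarrow> F x = G x"
  shows "jint q I F = jint q I G"
proof (cases I)
  case HalfLine
  then show ?thesis using assms hl_cong by simp
next
  case (ZeroTo a)
  then show ?thesis using assms jint0_cong[of a q F G] by (simp add: valid_qinterval_def)
next
  case (AlphaToOne \<alpha>)
  then show ?thesis using assms jint0_cong[of 1 q F G] jint0_cong[of \<alpha> q F G] by (simp add: valid_qinterval_def)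
qed

lemma jint_integrable_cong:
  assumes "valid_qinterval I" "q > 0" "\<And>x. x \<noteq> 0 \<Longrightarrow> F x = G x"
  shows "jint_integrable q I F = jint_integrable q I G"
proof (cases I)
  case HalfLine
  then show ?thesis using assms hl_cong by simp
next
  case (ZeroTo a)
  then show ?thesis using assms jint0_integrable_cong[of a q F G] by (simp add: valid_qinterval_def)
next
  case (AlphaToOne \<alpha>)
  then show ?thesis using assms jint0_integrable_cong[of 1 q F G] jint0_integrable_cong[of \<alpha> q F G]
    by (simp add: valid_qinterval_def)
qed

lemma jint_add:
  assumes "jint_integrable q I F" "jint_integrable q I G"
  shows "jint q I (\<lambda>x. F x + G x) = jint q I F + jint q I G"
proof (cases I)
  case HalfLine
  then show ?thesis using assms by (simp add: distrib_left infsum_add)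
next
  case (ZeroTo a)
  then show ?thesis using assms jint0_add by simp
next
  case (AlphaToOne \<alpha>)
  then show ?thesis using assms jint0_add[of q 1 F G] jint0_add[of q \<alpha> F G] by simp
qed

lemma jint_integrable_add:
  assumes "jint_integrable q I F" "jint_integrable q I G"
  shows "jint_integrable q I (\<lambda>x. F x + G x)"
proof (cases I)
  case HalfLine
  then show ?thesis using assms by (simp add: distrib_left summable_on_add)
next
  case (ZeroTo a)
  then show ?thesis using assms jint0_integrable_add by simp
next
  case (AlphaToOne \<alpha>)
  then show ?thesis using assms jint0_integrable_add[of q 1 F G] jint0_integrable_add[of q \<alpha> F G] by simp
qed

lemma jint_cmult: "jint q I (\<lambda>x. c * F x) = c * jint q I F"
proof (cases I)
  case HalfLine then show ?thesis by (simp only: hl_cmult)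
qed (simp_all add: jint0_cmult right_diff_distrib)

lemma jint_integrable_cmult:
  assumes "jint_integrable q I F"
  shows "jint_integrable q I (\<lambda>x. c * F x)"
proof (cases I)
  case HalfLine then show ?thesis using assms hl_integrable_cmult by (simp only:)
qed (use assms in \<open>simp_all add: jint0_integrable_cmult\<close>)

lemma jint_integrable_zero: "jint_integrable q I (\<lambda>x. 0)"
  by (cases I) (simp_all add: jint0_integrable_def)

lemma jint_zero: "jint q I (\<lambda>x. 0) = 0"
  by (cases I) (simp_all add: jint0_def)

lemma jint_uminus: "jint q I (\<lambda>x. - F x) = - jint q I F"
  using jint_cmult[of q I "-1" F] by simp

lemma jint_integrable_sum:
  assumes "finite K" "\<And>k. k \<in> K \<Longrightarrow> jint_integrable q I (F k)"
  shows "jint_integrable q I (\<lambda>x. \<Sum>k\<in>K. F k x)"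
  using assms
proof (induction K rule: finite_induct)
  case empty then show ?case by (simp add: jint_integrable_zero)
next
  case (insert k K)
  then show ?case by (simp add: jint_integrable_add)
qed

lemma jint_sum:
  assumes "finite K" "\<And>k. k \<in> K \<Longrightarrow> jint_integrable q I (F k)"
  shows "jint q I (\<lambda>x. \<Sum>k\<in>K. F k x) = (\<Sum>k\<in>K. jint q I (F k))"
  using assms
proof (induction K rule: finite_induct)
  case empty then show ?case by (simp add: jint_zero)
next
  case (insert k K)
  then show ?case by (simp add: jint_add jint_integrable_sum)
qed


section \<open>Abstract telescoping for Jackson integrals\<close>

lemma K0_abs:
  fixes UF VF Ef :: "real \<Rightarrow> real" and a q c :: real
  assumes hT: "\<And>n. (1-q) * (a*q^n * UF (a*q^n) + a*q^n * VF (a*q^n)) = Ef (a*q^n) - Ef (q*(a*q^n))"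
    and sU: "jint0_integrable q a UF" and sV: "jint0_integrable q a VF"
    and E0: "Ef a = 0" and lim: "(\<lambda>n. Ef (a*q^n)) \<longlonglongrightarrow> c"
  shows "jint0 q a VF = - jint0 q a UF - c"
proof -
  define U where "U = (\<lambda>n. a*q^n * UF (a*q^n))"
  define V where "V = (\<lambda>n. a*q^n * VF (a*q^n))"
  define T where "T = (\<lambda>n. (1-q) * (U n + V n))"
  have sU': "U summable_on UNIV" and sV': "V summable_on UNIV"
    using sU sV unfolding U_def V_def jint0_integrable_def by auto
  have sT: "T summable_on UNIV" unfolding T_def
    by (intro summable_on_cmult_right summable_on_add sU' sV')
  have "infsum T UNIV = Ef (a*q^0) - c"
  proof (rule tele_nat[OF sT])
    show "T n = Ef (a*q^n) - Ef (a*q^Suc n)" for n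
      unfolding T_def U_def V_def using hT[of n] by (simp add: algebra_simps)
    show "(\<lambda>n. Ef (a*q^n)) \<longlonglongrightarrow> c" by (rule lim)
  qed
  then have "infsum T UNIV = - c" using E0 by simp
  moreover have "infsum T UNIV = (1-q) * (infsum U UNIV + infsum V UNIV)"
    unfolding T_def by (simp add: infsum_cmult_right' infsum_add sU' sV')
  ultimately have "(1-q) * infsum V UNIV = - ((1-q) * infsum U UNIV) - c"
    by (simp add: algebra_simps)
  then show ?thesis unfolding jint0_def U_def V_def by simp
qed

lemma Kint_abs:
  fixes UF VF Ef :: "real \<Rightarrow> real" and q :: real
  assumes q: "q > 0"
    and hT: "\<And>s. (1-q) * (q powi s * UF (q powi s) + q powi s * VF (q powi s)) = Ef (q powi s) - Ef (q*(q powi s))"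
    and sU: "jint_integrable q HalfLine UF" and sV: "jint_integrable q HalfLine VF"
    and l1: "(\<lambda>n. Ef (q powi int n)) \<longlonglongrightarrow> 0" and l2: "(\<lambda>n. Ef (q powi (- int n))) \<longlonglongrightarrow> 0"
  shows "jint q HalfLine VF = - jint q HalfLine UF"
proof -
  define U where "U = (\<lambda>s. q powi s * UF (q powi s))"
  define V where "V = (\<lambda>s. q powi s * VF (q powi s))"
  define T where "T = (\<lambda>s. (1-q) * (U s + V s))"
  have sU': "U summable_on UNIV" and sV': "V summable_on UNIV"
    using sU sV unfolding U_def V_def by auto
  have sT: "T summable_on UNIV" unfolding T_def
    by (intro summable_on_cmult_right summable_on_add sU' sV')
  have "infsum T UNIV = 0"
  proof (rule tele_int[OF sT])
    show "T s = Ef (q powi s) - Ef (q powi (s+1))" for s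
    proof -
      have "q powi (s+1) = q * q powi s" using q by (simp add: power_int_add)
      then show ?thesis unfolding T_def U_def V_def using hT[of s] by simp
    qed
    show "(\<lambda>n. Ef (q powi int n)) \<longlonglongrightarrow> 0" by (rule l1)
    show "(\<lambda>n. Ef (q powi (- int n))) \<longlonglongrightarrow> 0" by (rule l2)
  qed
  moreover have "infsum T UNIV = (1-q) * (infsum U UNIV + infsum V UNIV)"
    unfolding T_def by (simp add: infsum_cmult_right' infsum_add sU' sV')
  ultimately have "(1-q) * infsum V UNIV = - ((1-q) * infsum U UNIV)"
    by (simp add: algebra_simps)
  then show ?thesis unfolding U_def V_def by simp
qed

lemma key_pointwise:
  fixes x q :: real and f g \<phi> \<psi> :: "real poly" and \<rho> :: "real \<Rightarrow> real"
  assumes x: "x \<noteq> 0" and q: "0 < q" "q < 1"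
    and pe: "\<rho> (q*x) * poly f (q*x) = \<rho> x * (poly f x - q powr (-1/2) * (1-q) * x * poly g x)"
  shows "(1-q) * (x * (poly \<psi> x * Aq q f g (poly \<phi>) x * \<rho> x)
      + x * ((poly \<phi> x * Dq q (poly \<psi>) x - poly \<psi> x * Dq q (poly \<phi>) x) * (poly f (q*x) * \<rho> (q*x))))
    = poly f x * \<rho> x * poly \<phi> (inverse q * x) * poly \<psi> x
      - poly f (q*x) * \<rho> (q*x) * poly \<phi> (inverse q * (q*x)) * poly \<psi> (q*x)"
proof -
  define k where "k = q powr (-1/2)"
  have iq: "inverse q * (q*x) = x" using q by simp
  have 1: "(1-q) * (x * Aq q f g (poly \<phi>) x) = k*(1-q)*x*poly g x*poly \<phi> (q*x)
       + poly f x * poly \<phi> (inverse q * x) - poly f x * poly \<phi> (q*x)"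
  proof -
    have d0: "1 - inverse q = (q - 1) / q" using q by (simp add: field_simps)
    have d1: "(1-q)*x*(inverse q * (A/((1 - inverse q)*x))) = - A" for A
      unfolding d0 using q x by (simp add: field_simps)
    have d2: "(1-q)*x*(A/((1-q)*x)) = A" for A
      using q x by (simp add: field_simps)
    have "(1-q) * (x * Aq q f g (poly \<phi>) x) = k*(1-q)*x*poly g x*poly \<phi> (q*x)
       + poly f x * ((1-q)*x*(inverse q * ((poly \<phi> x - poly \<phi> (inverse q * x))/((1 - inverse q)*x))))
       + poly f x * ((1-q)*x*((poly \<phi> x - poly \<phi> (q*x))/((1-q)*x)))"
      unfolding Aq_def Tq_def Dq_def Dqinv_def k_def[symmetric] by (simp add: algebra_simps)
    also have "\<dots> = k*(1-q)*x*poly g x*poly \<phi> (q*x)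
       + poly f x * poly \<phi> (inverse q * x) - poly f x * poly \<phi> (q*x)"
      unfolding d1 d2 by (simp add: algebra_simps)
    finally show ?thesis .
  qed
  have 2: "(1-q) * (x * (poly \<phi> x * Dq q (poly \<psi>) x - poly \<psi> x * Dq q (poly \<phi>) x))
       = poly \<psi> x * poly \<phi> (q*x) - poly \<phi> x * poly \<psi> (q*x)"
  proof -
    have d2: "(1-q)*x*(A/((1-q)*x)) = A" for A
      using q x by (simp add: field_simps)
    have "(1-q) * (x * (poly \<phi> x * Dq q (poly \<psi>) x - poly \<psi> x * Dq q (poly \<phi>) x))
      = poly \<phi> x * ((1-q)*x*((poly \<psi> x - poly \<psi> (q*x))/((1-q)*x)))
       - poly \<psi> x * ((1-q)*x*((poly \<phi> x - poly \<phi> (q*x))/((1-q)*x)))"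
      unfolding Dq_def by (simp add: algebra_simps)
    then show ?thesis unfolding d2 by (simp add: algebra_simps)
  qed
  have pe': "poly f (q*x) * \<rho> (q*x) = \<rho> x * poly f x - k * (1-q) * x * poly g x * \<rho> x"
    using pe unfolding k_def[symmetric] by (simp add: algebra_simps)
  have "(1-q) * (x * (poly \<psi> x * Aq q f g (poly \<phi>) x * \<rho> x)
      + x * ((poly \<phi> x * Dq q (poly \<psi>) x - poly \<psi> x * Dq q (poly \<phi>) x) * (poly f (q*x) * \<rho> (q*x))))
    = poly \<psi> x * \<rho> x * ((1-q) * (x * Aq q f g (poly \<phi>) x))
      + ((1-q) * (x * (poly \<phi> x * Dq q (poly \<psi>) x - poly \<psi> x * Dq q (poly \<phi>) x))) * (poly f (q*x) * \<rho> (q*x))"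
    by (simp add: algebra_simps)
  also have "\<dots> = poly \<psi> x * \<rho> x * (k*(1-q)*x*poly g x*poly \<phi> (q*x)
       + poly f x * poly \<phi> (inverse q * x) - poly f x * poly \<phi> (q*x))
      + (poly \<psi> x * poly \<phi> (q*x) - poly \<phi> x * poly \<psi> (q*x)) * (poly f (q*x) * \<rho> (q*x))"
    unfolding 1 2 ..
  also have "\<dots> = poly f x * \<rho> x * poly \<phi> (inverse q * x) * poly \<psi> x
      - poly f (q*x) * \<rho> (q*x) * poly \<phi> x * poly \<psi> (q*x)"
    unfolding pe' by (simp add: algebra_simps)
  finally show ?thesis unfolding iq .
qed



lemma poly_scale: "poly (pcompose p [:0, c:]) x = poly p (c * x)"
  by (simp add: poly_pcompose algebra_simps)

lemma degree_scale: "degree (pcompose p [:0, c:]) \<le> degree p"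
proof -
  have "degree (pcompose p [:0, c:]) \<le> degree p * degree [:0, c:]" by (rule degree_pcompose_le)
  also have "\<dots> \<le> degree p * 1" by (intro mult_le_mono2) auto
  finally show ?thesis by simp
qed

lemma div_x_poly:
  fixes W :: "real poly"
  assumes "poly W 0 = 0"
  obtains W0 where "W = [:0, 1:] * W0" "degree W0 \<le> degree W - 1"
proof -
  have "[:0, 1:] dvd W" using dvd_iff_poly_eq_0[of 0 W] assms by simp
  then obtain W0 where W: "W = [:0, 1:] * W0" by (elim dvdE)
  have "degree W0 \<le> degree W - 1"
  proof (cases "W0 = 0")
    case False
    then have "degree W = degree [:0,1::real:] + degree W0" unfolding W by (intro degree_mult_eq) auto
    then show ?thesis by simp
  qed simp
  with W that show ?thesis by blast
qed

lemma Aq_expand: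
  fixes x q :: real
  assumes x: "x \<noteq> 0" and q: "0 < q" "q < 1"
  shows "(1-q) * (x * Aq q f g (poly \<phi>) x) = q powr (-1/2)*(1-q)*x*poly g x*poly \<phi> (q*x)
       + poly f x * poly \<phi> (inverse q * x) - poly f x * poly \<phi> (q*x)"
proof -
  define k where "k = q powr (-1/2)"
  have d0: "1 - inverse q = (q - 1) / q" using q by (simp add: field_simps)
  have d1: "(1-q)*x*(inverse q * (A/((1 - inverse q)*x))) = - A" for A
    unfolding d0 using q x by (simp add: field_simps)
  have d2: "(1-q)*x*(A/((1-q)*x)) = A" for A
    using q x by (simp add: field_simps)
  have "(1-q) * (x * Aq q f g (poly \<phi>) x) = k*(1-q)*x*poly g x*poly \<phi> (q*x)
     + poly f x * ((1-q)*x*(inverse q * ((poly \<phi> x - poly \<phi> (inverse q * x))/((1 - inverse q)*x))))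
     + poly f x * ((1-q)*x*((poly \<phi> x - poly \<phi> (q*x))/((1-q)*x)))"
    unfolding Aq_def Tq_def Dq_def Dqinv_def k_def[symmetric] by (simp add: algebra_simps)
  also have "\<dots> = k*(1-q)*x*poly g x*poly \<phi> (q*x)
     + poly f x * poly \<phi> (inverse q * x) - poly f x * poly \<phi> (q*x)"
    unfolding d1 d2 by (simp add: algebra_simps)
  finally show ?thesis unfolding k_def .
qed

lemma Aq_poly:
  fixes q :: real and f g \<phi> :: "real poly"
  assumes q: "0 < q" "q < 1" and degf: "degree f \<le> 2" and degg: "degree g \<le> 1"
  obtains R where "degree R \<le> degree \<phi> + 1" "\<And>x. x \<noteq> 0 \<Longrightarrow> Aq q f g (poly \<phi>) x = poly R x"
proof -
  define k where "k = q powr (-1/2)"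
  define W where "W = f * pcompose \<phi> [:0, inverse q:] - (f - smult (k*(1-q)) (pCons 0 g)) * pcompose \<phi> [:0, q:]"
  have pW: "poly W x = poly f x * poly \<phi> (inverse q * x) - (poly f x - k*(1-q)*x*poly g x) * poly \<phi> (q*x)" for x
    unfolding W_def by (simp add: poly_scale algebra_simps)
  have "poly W 0 = 0" unfolding pW by simp
  then obtain W0 where W0: "W = [:0, 1:] * W0" "degree W0 \<le> degree W - 1" by (rule div_x_poly)
  have dW: "degree W \<le> degree \<phi> + 2"
  proof -
    have d1: "degree (f * pcompose \<phi> [:0, inverse q:]) \<le> degree \<phi> + 2"
      using degree_mult_le[of f "pcompose \<phi> [:0, inverse q:]"] degree_scale[of \<phi> "inverse q"] degf by linarith
    have "degree (smult (k*(1-q)) (pCons 0 g)) \<le> 2"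
      using degree_smult_le[of "k*(1-q)" "pCons 0 g"] degree_pCons_le[of 0 g] degg by linarith
    then have "degree (f - smult (k*(1-q)) (pCons 0 g)) \<le> 2"
      using degree_diff_le[of f 2 "smult (k*(1-q)) (pCons 0 g)"] degf by blast
    then have d2: "degree ((f - smult (k*(1-q)) (pCons 0 g)) * pcompose \<phi> [:0, q:]) \<le> degree \<phi> + 2"
      using degree_mult_le[of "f - smult (k*(1-q)) (pCons 0 g)" "pcompose \<phi> [:0, q:]"] degree_scale[of \<phi> q] by linarith
    show ?thesis unfolding W_def using degree_diff_le[OF d1 d2] .
  qed
  define R where "R = smult (1/(1-q)) W0"
  have "degree R \<le> degree \<phi> + 1" unfolding R_def using W0(2) dW degree_smult_le[of "1/(1-q)" W0] by linarith
  moreover have "Aq q f g (poly \<phi>) x = poly R x" if x: "x \<noteq> 0" for x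
  proof -
    have "(1-q) * (x * Aq q f g (poly \<phi>) x) = poly W x"
      unfolding Aq_expand[OF x q] pW k_def by (simp add: algebra_simps)
    also have "\<dots> = x * poly W0 x" unfolding W0(1) by simp
    finally have "x * ((1-q) * Aq q f g (poly \<phi>) x) = x * poly W0 x" by (simp add: algebra_simps)
    then have "(1-q) * Aq q f g (poly \<phi>) x = poly W0 x" using x by simp
    then show ?thesis unfolding R_def using x q by (simp add: field_simps)
  qed
  ultimately show ?thesis using that by blast
qed

lemma skew_poly:
  fixes q :: real and f \<phi> \<psi> :: "real poly" and \<rho> :: "real \<Rightarrow> real"
  assumes q: "0 < q" "q < 1"
  obtains P where "\<And>x. x \<noteq> 0 \<Longrightarrow>
     x * ((poly \<phi> x * Dq q (poly \<psi>) x - poly \<psi> x * Dq q (poly \<phi>) x) * (poly f (q*x) * \<rho> (q*x)))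
       = (q*x) * (poly P (q*x) * \<rho> (q*x))"
proof -
  define D where "D = \<psi> * pcompose \<phi> [:0, q:] - \<phi> * pcompose \<psi> [:0, q:]"
  have pD: "poly D x = poly \<psi> x * poly \<phi> (q*x) - poly \<phi> x * poly \<psi> (q*x)" for x
    unfolding D_def by (simp add: poly_scale)
  have "poly D 0 = 0" unfolding pD by simp
  then obtain D0 where D0: "D = [:0, 1:] * D0" by (rule div_x_poly)
  define P where "P = smult (1/(q*(1-q))) (pcompose D0 [:0, inverse q:] * f)"
  have "x * ((poly \<phi> x * Dq q (poly \<psi>) x - poly \<psi> x * Dq q (poly \<phi>) x) * (poly f (q*x) * \<rho> (q*x)))
       = (q*x) * (poly P (q*x) * \<rho> (q*x))" if x: "x \<noteq> 0" for x
  proof -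
    have d2: "(1-q)*x*(A/((1-q)*x)) = A" for A
      using q x by (simp add: field_simps)
    have "(1-q) * (x * (poly \<phi> x * Dq q (poly \<psi>) x - poly \<psi> x * Dq q (poly \<phi>) x))
      = poly \<phi> x * ((1-q)*x*((poly \<psi> x - poly \<psi> (q*x))/((1-q)*x)))
       - poly \<psi> x * ((1-q)*x*((poly \<phi> x - poly \<phi> (q*x))/((1-q)*x)))"
      unfolding Dq_def by (simp add: algebra_simps)
    also have "\<dots> = poly D x" unfolding d2 pD by (simp add: algebra_simps)
    also have "\<dots> = x * poly D0 x" unfolding D0 by simp
    finally have e: "x * (poly \<phi> x * Dq q (poly \<psi>) x - poly \<psi> x * Dq q (poly \<phi>) x) = x * poly D0 x / (1-q)"
      using q by (simp add: field_simps)
    have pP: "poly P (q*x) = poly D0 x * poly f (q*x) / (q*(1-q))"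
      unfolding P_def using q by (simp add: poly_scale mult.assoc[symmetric])
    have "x * ((poly \<phi> x * Dq q (poly \<psi>) x - poly \<psi> x * Dq q (poly \<phi>) x) * (poly f (q*x) * \<rho> (q*x)))
      = (x * (poly \<phi> x * Dq q (poly \<psi>) x - poly \<psi> x * Dq q (poly \<phi>) x)) * (poly f (q*x) * \<rho> (q*x))"
      by (simp only: mult.assoc)
    also have "\<dots> = x * poly D0 x / (1-q) * (poly f (q*x) * \<rho> (q*x))" by (simp only: e)
    also have "\<dots> = (q*x) * (poly P (q*x) * \<rho> (q*x))" unfolding pP using q by (simp add: field_simps)
    finally show ?thesis .
  qed
  then show ?thesis using that by blast
qed



lemma shift_nat: "(G::nat\<Rightarrow>real) summable_on UNIV \<Longrightarrow> (\<lambda>n. G (Suc n)) summable_on UNIV"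
proof -
  assume G: "G summable_on UNIV"
  have inj: "inj_on Suc UNIV" by simp
  have "G summable_on range Suc" using G summable_on_subset_banach by blast
  then have "(G \<circ> Suc) summable_on UNIV" using summable_on_reindex[OF inj, of G] by simp
  then show ?thesis by (simp add: comp_def)
qed

lemma shift_int: "(G::int\<Rightarrow>real) summable_on UNIV \<Longrightarrow> (\<lambda>s. G (s+1)) summable_on UNIV"
proof -
  assume G: "G summable_on UNIV"
  have inj: "inj_on (\<lambda>s::int. s+1) UNIV" by (simp add: inj_on_def)
  have r: "range (\<lambda>s::int. s+1) = UNIV"
  proof (intro set_eqI iffI)
    fix s :: int show "s \<in> range (\<lambda>s::int. s+1)" using image_eqI[of s "\<lambda>s. s+1" "s - 1"] by simp
  qed simp
  have "(G \<circ> (\<lambda>s. s+1)) summable_on UNIV" using summable_on_reindex[OF inj, of G] r G by simp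
  then show ?thesis by (simp add: comp_def)
qed

lemma V0_integrable:
  fixes VF :: "real \<Rightarrow> real"
  assumes a: "a \<noteq> 0" and q: "q > 0" and P: "jint0_integrable q a (\<lambda>x. poly P x * \<rho> x)"
    and h: "\<And>x. x \<noteq> 0 \<Longrightarrow> x * VF x = (q*x) * (poly P (q*x) * \<rho> (q*x))"
  shows "jint0_integrable q a VF"
proof -
  define G where "G = (\<lambda>n. a * q ^ n * (poly P (a * q ^ n) * \<rho> (a * q ^ n)))"
  have "G summable_on UNIV" using P unfolding jint0_integrable_def G_def .
  then have "(\<lambda>n. G (Suc n)) summable_on UNIV" by (rule shift_nat)
  moreover have "G (Suc n) = a * q ^ n * VF (a * q ^ n)" for n
  proof -
    have nz: "a * q ^ n \<noteq> 0" using a q by simp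
    have es: "q*(a*q^n) = a*q^(Suc n)" by simp
    have e1: "a * q ^ n * VF (a * q ^ n) = a*q^Suc n * (poly P (a*q^Suc n) * \<rho> (a*q^Suc n))"
      using h[OF nz] unfolding es .
    show ?thesis unfolding G_def by (rule e1[symmetric])
  qed
  ultimately show ?thesis unfolding jint0_integrable_def by simp
qed

lemma Vhl_integrable:
  fixes VF :: "real \<Rightarrow> real"
  assumes q: "q > 0" and P: "jint_integrable q HalfLine (\<lambda>x. poly P x * \<rho> x)"
    and h: "\<And>x. x \<noteq> 0 \<Longrightarrow> x * VF x = (q*x) * (poly P (q*x) * \<rho> (q*x))"
  shows "jint_integrable q HalfLine VF"
proof -
  define G where "G = (\<lambda>s. q powi s * (poly P (q powi s) * \<rho> (q powi s)))"
  have "G summable_on UNIV" using P unfolding G_def by simp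
  then have "(\<lambda>s. G (s+1)) summable_on UNIV" by (rule shift_int)
  moreover have "G (s+1) = q powi s * VF (q powi s)" for s
  proof -
    have "q powi s \<noteq> 0" using q by simp
    moreover have "q powi (s+1) = q * q powi s" using q by (simp add: power_int_add)
    ultimately show ?thesis using h unfolding G_def by simp
  qed
  ultimately show ?thesis by simp
qed

lemma lim_nat:
  fixes q a L :: real and f \<phi> \<psi> :: "real poly"
  assumes q: "0 < q" "q < 1" and l: "(\<lambda>n. poly f (a*q^n) * \<rho> (a*q^n)) \<longlonglongrightarrow> L"
  shows "(\<lambda>n. poly f (a*q^n) * \<rho> (a*q^n) * poly \<phi> (inverse q * (a*q^n)) * poly \<psi> (a*q^n))
     \<longlonglongrightarrow> L * poly \<phi> 0 * poly \<psi> 0"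
proof -
  have x0: "(\<lambda>n. a*q^n) \<longlonglongrightarrow> 0"
    using tendsto_mult[OF tendsto_const[of a] LIMSEQ_power_zero[of q]] q by simp
  have "(\<lambda>n. poly \<phi> (inverse q * (a*q^n))) \<longlonglongrightarrow> poly \<phi> (inverse q * 0)"
    by (intro tendsto_intros x0)
  moreover have "(\<lambda>n. poly \<psi> (a*q^n)) \<longlonglongrightarrow> poly \<psi> 0"
    by (intro tendsto_intros x0)
  ultimately show ?thesis using l by (auto intro!: tendsto_mult)
qed

locale qset =
  fixes q :: real and I :: qinterval and \<rho> :: "real \<Rightarrow> real" and f g :: "real poly"
  assumes q: "0 < q" "q < 1" and I: "valid_qinterval I"
    and moments: "\<And>k::nat. jint_integrable q I (\<lambda>x. x ^ k * \<rho> x)"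
    and degf: "degree f \<le> 2" and degg: "degree g \<le> 1"
    and pearson: "\<And>x. x \<in> qlattice q I \<Longrightarrow>
        \<rho> (q * x) * poly f (q * x) = \<rho> x * (poly f x - q powr (-1/2) * (1 - q) * x * poly g x)"
    and ends: "vanishes_at_ends q I (\<lambda>x. poly f x * \<rho> x)"
begin

lemma integrable_poly: "jint_integrable q I (\<lambda>x. poly P x * \<rho> x)"
proof -
  have e: "(\<lambda>x. poly P x * \<rho> x) = (\<lambda>x. \<Sum>i\<le>degree P. coeff P i * (x^i * \<rho> x))"
    by (rule ext) (simp add: poly_altdef sum_distrib_right mult.assoc)
  show ?thesis unfolding e by (intro jint_integrable_sum jint_integrable_cmult moments) simp
qed

definition J where "J P = jint q I (\<lambda>x. poly P x * \<rho> x)"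

lemma J_add: "J (P + Q) = J P + J Q"
  unfolding J_def by (simp add: distrib_right jint_add integrable_poly)

lemma J_smult: "J (smult c P) = c * J P"
  unfolding J_def by (simp add: mult.assoc jint_cmult)

lemma J_zero: "J 0 = 0"
  unfolding J_def by (simp add: jint_zero)

lemma J_diff: "J (P - Q) = J P - J Q"
proof -
  have "P - Q = P + smult (-1) Q" by simp
  then show ?thesis by (simp only: J_add J_smult)
qed

lemma J_sum: "J (\<Sum>k\<in>K. P k) = (\<Sum>k\<in>K. J (P k))"
proof (induction K rule: infinite_finite_induct)
  case (infinite A) then show ?case by (simp add: J_zero)
next
  case empty then show ?case by (simp add: J_zero)
next
  case (insert x F) then show ?case by (simp add: J_add)
qed

lemma lattice_nz: "x \<in> qlattice q I \<Longrightarrow> x \<noteq> 0"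
  using I q by (cases I) (auto simp: valid_qinterval_def)

lemma U_J:
  obtains R where "degree R \<le> degree \<phi> + 1"
    "\<And>\<psi>. jint q I (\<lambda>x. poly \<psi> x * Aq q f g (poly \<phi>) x * \<rho> x) = J (\<psi> * R)"
    "\<And>\<psi>. jint_integrable q I (\<lambda>x. poly \<psi> x * Aq q f g (poly \<phi>) x * \<rho> x)"
proof -
  obtain R where R: "degree R \<le> degree \<phi> + 1" "\<And>x. x \<noteq> 0 \<Longrightarrow> Aq q f g (poly \<phi>) x = poly R x"
    using Aq_poly[OF q degf degg] by blast
  have e: "poly \<psi> x * Aq q f g (poly \<phi>) x * \<rho> x = poly (\<psi> * R) x * \<rho> x" if "x \<noteq> 0" for \<psi> x
    using R(2)[OF that] by simp
  show ?thesis
  proof (rule that[OF R(1)])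
    fix \<psi>
    show "jint q I (\<lambda>x. poly \<psi> x * Aq q f g (poly \<phi>) x * \<rho> x) = J (\<psi> * R)"
      unfolding J_def by (rule jint_cong[OF I q(1)], rule e)
    have "jint_integrable q I (\<lambda>x. poly (\<psi> * R) x * \<rho> x)" by (rule integrable_poly)
    then show "jint_integrable q I (\<lambda>x. poly \<psi> x * Aq q f g (poly \<phi>) x * \<rho> x)"
    proof -
      have "jint_integrable q I (\<lambda>x. poly \<psi> x * Aq q f g (poly \<phi>) x * \<rho> x)
         = jint_integrable q I (\<lambda>x. poly (\<psi> * R) x * \<rho> x)"
        by (rule jint_integrable_cong[OF I q(1)], rule e)
      with \<open>jint_integrable q I (\<lambda>x. poly (\<psi> * R) x * \<rho> x)\<close> show ?thesis by simp
    qed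
  qed
qed

lemma V_integrable:
  "jint_integrable q I (\<lambda>x. (poly \<phi> x * Dq q (poly \<psi>) x - poly \<psi> x * Dq q (poly \<phi>) x) * (poly f (q*x) * \<rho> (q*x)))"
proof -
  obtain P where P: "\<And>x. x \<noteq> 0 \<Longrightarrow>
     x * ((poly \<phi> x * Dq q (poly \<psi>) x - poly \<psi> x * Dq q (poly \<phi>) x) * (poly f (q*x) * \<rho> (q*x)))
       = (q*x) * (poly P (q*x) * \<rho> (q*x))"
    using skew_poly[OF q, of \<phi> \<psi> f \<rho>] by blast
  have iP: "jint_integrable q I (\<lambda>x. poly P x * \<rho> x)" by (rule integrable_poly)
  show ?thesis
  proof (cases I)
    case HalfLine
    then show ?thesis using Vhl_integrable[OF q(1) _ P] iP by simp
  next
    case (ZeroTo a)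
    then show ?thesis using V0_integrable[OF _ q(1) _ P] iP I by (simp add: valid_qinterval_def)
  next
    case (AlphaToOne \<alpha>)
    then show ?thesis using V0_integrable[OF _ q(1) _ P] iP I by (simp add: valid_qinterval_def)
  qed
qed

lemma decay:
  assumes "I = HalfLine"
  shows "(\<lambda>n. poly P (inverse q ^ n) * \<rho> (inverse q ^ n)) \<longlonglongrightarrow> 0"
proof -
  define y where "y = (\<lambda>n::nat. inverse q ^ n)"
  have mk: "(\<lambda>n. y n ^ k * \<rho> (y n)) \<longlonglongrightarrow> 0" for k
  proof -
    have S: "(\<lambda>s. q powi s * ((q powi s) ^ k * \<rho> (q powi s))) summable_on UNIV"
      using moments[of k] assms by simp
    define h where "h = (\<lambda>n::nat. - int n)"
    have inj: "inj_on h UNIV" unfolding h_def by (simp add: inj_on_def)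
    have "(\<lambda>s. q powi s * ((q powi s) ^ k * \<rho> (q powi s))) summable_on range h"
      using S summable_on_subset_banach by blast
    then have "((\<lambda>s. q powi s * ((q powi s) ^ k * \<rho> (q powi s))) \<circ> h) summable_on UNIV"
      using summable_on_reindex[OF inj, of "\<lambda>s. q powi s * ((q powi s) ^ k * \<rho> (q powi s))"] by simp
    moreover have "q powi (h n) = y n" for n
      unfolding h_def y_def by (simp add: power_int_minus power_inverse)
    ultimately have "(\<lambda>n. y n * (y n ^ k * \<rho> (y n))) summable_on UNIV" by (simp add: comp_def)
    then have "summable (\<lambda>n. y n * (y n ^ k * \<rho> (y n)))" by (rule summable_on_imp_summable)
    then have t: "(\<lambda>n. y n * (y n ^ k * \<rho> (y n))) \<longlonglongrightarrow> 0" by (rule summable_LIMSEQ_zero)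
    have "(\<lambda>n. q ^ n * (y n * (y n ^ k * \<rho> (y n)))) \<longlonglongrightarrow> 0 * 0"
      by (intro tendsto_mult t LIMSEQ_power_zero) (use q in simp)
    moreover have "q ^ n * (y n * (y n ^ k * \<rho> (y n))) = y n ^ k * \<rho> (y n)" for n
    proof -
      have "q ^ n * y n = 1" unfolding y_def using q by (simp add: power_mult_distrib[symmetric])
      then show ?thesis by (metis mult.assoc mult_1)
    qed
    ultimately show ?thesis by simp
  qed
  have "(\<lambda>n. \<Sum>i\<le>degree P. coeff P i * (y n ^ i * \<rho> (y n))) \<longlonglongrightarrow> (\<Sum>i\<le>degree P. coeff P i * 0)"
    by (intro tendsto_sum tendsto_mult tendsto_const mk)
  moreover have "poly P (y n) * \<rho> (y n) = (\<Sum>i\<le>degree P. coeff P i * (y n ^ i * \<rho> (y n)))" for n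
    by (simp add: poly_altdef sum_distrib_right mult.assoc)
  ultimately show ?thesis unfolding y_def by simp
qed

end



context qset begin

lemma K:
  "skew_ip q I (\<lambda>x. poly f (q*x) * \<rho> (q*x)) (poly \<phi>) (poly \<psi>)
     = - jint q I (\<lambda>x. poly \<psi> x * Aq q f g (poly \<phi>) x * \<rho> x)"
proof -
  define UF where "UF = (\<lambda>x. poly \<psi> x * Aq q f g (poly \<phi>) x * \<rho> x)"
  define VF where "VF = (\<lambda>x. (poly \<phi> x * Dq q (poly \<psi>) x - poly \<psi> x * Dq q (poly \<phi>) x) * (poly f (q*x) * \<rho> (q*x)))"
  define Ef where "Ef = (\<lambda>y. poly f y * \<rho> y * poly \<phi> (inverse q * y) * poly \<psi> y)"
  have lhs: "skew_ip q I (\<lambda>x. poly f (q*x) * \<rho> (q*x)) (poly \<phi>) (poly \<psi>) = jint q I VF"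
    unfolding skew_ip_def VF_def ..
  have hT: "(1-q)*(x*UF x + x*VF x) = Ef x - Ef (q*x)" if "x \<in> qlattice q I" for x
    unfolding UF_def VF_def Ef_def
    by (rule key_pointwise[OF lattice_nz[OF that] q pearson[OF that]])
  obtain R where R: "\<And>\<psi>. jint_integrable q I (\<lambda>x. poly \<psi> x * Aq q f g (poly \<phi>) x * \<rho> x)"
    using U_J by blast
  have sU: "jint_integrable q I UF" unfolding UF_def by (rule R)
  have sV: "jint_integrable q I VF" unfolding VF_def by (rule V_integrable)
  have E0: "Ef a = 0" if "poly f a * \<rho> a = 0" for a
    unfolding Ef_def using that by simp
  show ?thesis
  proof (cases I)
    case HalfLine
    have hT': "(1-q)*(q powi s * UF (q powi s) + q powi s * VF (q powi s)) = Ef (q powi s) - Ef (q*(q powi s))" for s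
      using hT HalfLine by simp
    have e1: "(\<lambda>n. poly f (q^n) * \<rho> (q^n)) \<longlonglongrightarrow> 0" using ends HalfLine by simp
    have "(\<lambda>n. Ef (1*q^n)) \<longlonglongrightarrow> 0 * poly \<phi> 0 * poly \<psi> 0"
      unfolding Ef_def by (rule lim_nat[OF q]) (use e1 in simp)
    then have l1: "(\<lambda>n. Ef (q powi int n)) \<longlonglongrightarrow> 0" by simp
    have "(\<lambda>n. poly (f * pcompose \<phi> [:0, inverse q:] * \<psi>) (inverse q ^ n) * \<rho> (inverse q ^ n)) \<longlonglongrightarrow> 0"
      by (rule decay[OF HalfLine])
    moreover have "Ef (q powi (- int n)) = poly (f * pcompose \<phi> [:0, inverse q:] * \<psi>) (inverse q ^ n) * \<rho> (inverse q ^ n)" for n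
      unfolding Ef_def by (simp add: poly_scale power_int_minus power_inverse)
    ultimately have l2: "(\<lambda>n. Ef (q powi (- int n))) \<longlonglongrightarrow> 0" by simp
    have jh: "jint q HalfLine VF = - jint q HalfLine UF"
      by (rule Kint_abs[OF q(1) hT']) (use sU sV HalfLine l1 l2 in simp_all)
    show ?thesis unfolding lhs using jh unfolding UF_def HalfLine .
  next
    case (ZeroTo a)
    have hT': "(1-q) * (a*q^n * UF (a*q^n) + a*q^n * VF (a*q^n)) = Ef (a*q^n) - Ef (q*(a*q^n))" for n
      by (rule hT, unfold ZeroTo qlattice.simps, rule rangeI)
    have en: "poly f a * \<rho> a = 0" "(\<lambda>n. poly f (a*q^n) * \<rho> (a*q^n)) \<longlonglongrightarrow> 0" using ends ZeroTo by simp_all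
    have "(\<lambda>n. Ef (a*q^n)) \<longlonglongrightarrow> 0 * poly \<phi> 0 * poly \<psi> 0"
      unfolding Ef_def by (rule lim_nat[OF q en(2)])
    then have l: "(\<lambda>n. Ef (a*q^n)) \<longlonglongrightarrow> 0" by simp
    have jz: "jint0 q a VF = - jint0 q a UF - 0"
      by (rule K0_abs[OF hT' _ _ E0[OF en(1)] l]) (use sU sV ZeroTo in simp_all)
    show ?thesis unfolding lhs using jz unfolding UF_def ZeroTo by simp
  next
    case (AlphaToOne \<alpha>)
    have hT1: "(1-q) * (1*q^n * UF (1*q^n) + 1*q^n * VF (1*q^n)) = Ef (1*q^n) - Ef (q*(1*q^n))" for n
      by (rule hT) (simp add: AlphaToOne rangeI)
    have hT2: "(1-q) * (\<alpha>*q^n * UF (\<alpha>*q^n) + \<alpha>*q^n * VF (\<alpha>*q^n)) = Ef (\<alpha>*q^n) - Ef (q*(\<alpha>*q^n))" for n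
      by (rule hT, unfold AlphaToOne qlattice.simps, rule UnI2, rule rangeI)
    obtain L where en: "poly f 1 * \<rho> 1 = 0" "poly f \<alpha> * \<rho> \<alpha> = 0"
      "(\<lambda>n. poly f (q^n) * \<rho> (q^n)) \<longlonglongrightarrow> L" "(\<lambda>n. poly f (\<alpha>*q^n) * \<rho> (\<alpha>*q^n)) \<longlonglongrightarrow> L"
      using ends AlphaToOne by auto
    have la: "(\<lambda>n. Ef (\<alpha>*q^n)) \<longlonglongrightarrow> L * poly \<phi> 0 * poly \<psi> 0"
      unfolding Ef_def by (rule lim_nat[OF q en(4)])
    have l1: "(\<lambda>n. Ef (1*q^n)) \<longlonglongrightarrow> L * poly \<phi> 0 * poly \<psi> 0"
      unfolding Ef_def by (rule lim_nat[OF q]) (use en(3) in simp)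
    have j1: "jint0 q 1 VF = - jint0 q 1 UF - L * poly \<phi> 0 * poly \<psi> 0"
      by (rule K0_abs[OF hT1 _ _ E0 l1]) (use sU sV AlphaToOne en in simp_all)
    have j2: "jint0 q \<alpha> VF = - jint0 q \<alpha> UF - L * poly \<phi> 0 * poly \<psi> 0"
      by (rule K0_abs[OF hT2 _ _ E0 la]) (use sU sV AlphaToOne en in simp_all)
    show ?thesis unfolding lhs using j1 j2 unfolding UF_def AlphaToOne by simp
  qed
qed

definition sk where "sk \<phi> \<psi> = skew_ip q I (\<lambda>x. poly f (q*x) * \<rho> (q*x)) (poly \<phi>) (poly \<psi>)"

lemma sk_antisym: "sk \<phi> \<psi> = - sk \<psi> \<phi>"
proof -
  have "(\<lambda>x. (poly \<psi> x * Dq q (poly \<phi>) x - poly \<phi> x * Dq q (poly \<psi>) x) * (poly f (q*x) * \<rho> (q*x)))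
      = (\<lambda>x. - ((poly \<phi> x * Dq q (poly \<psi>) x - poly \<psi> x * Dq q (poly \<phi>) x) * (poly f (q*x) * \<rho> (q*x))))"
    by (rule ext) (simp add: algebra_simps)
  then show ?thesis unfolding sk_def skew_ip_def by (simp add: jint_uminus)
qed

lemma sk_self: "sk \<phi> \<phi> = 0"
  using sk_antisym[of \<phi> \<phi>] by simp

lemma sk_J:
  obtains R where "degree R \<le> degree \<phi> + 1" "\<And>\<psi>. sk \<phi> \<psi> = - J (\<psi> * R)"
proof -
  obtain R where R: "degree R \<le> degree \<phi> + 1"
    "\<And>\<psi>. jint q I (\<lambda>x. poly \<psi> x * Aq q f g (poly \<phi>) x * \<rho> x) = J (\<psi> * R)"
    using U_J by blast
  show ?thesis using that[OF R(1)] R(2) K unfolding sk_def by simp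
qed

lemma sk_add2: "sk \<phi> (\<psi>1 + \<psi>2) = sk \<phi> \<psi>1 + sk \<phi> \<psi>2"
proof -
  obtain R where "\<And>\<psi>. sk \<phi> \<psi> = - J (\<psi> * R)" using sk_J by blast
  then show ?thesis by (simp add: distrib_right J_add)
qed

lemma sk_smult2: "sk \<phi> (smult c \<psi>) = c * sk \<phi> \<psi>"
proof -
  obtain R where "\<And>\<psi>. sk \<phi> \<psi> = - J (\<psi> * R)" using sk_J by blast
  then show ?thesis by (simp add: J_smult)
qed

lemma sk_add1: "sk (\<phi>1 + \<phi>2) \<psi> = sk \<phi>1 \<psi> + sk \<phi>2 \<psi>"
proof -
  have "sk (\<phi>1 + \<phi>2) \<psi> = - sk \<psi> (\<phi>1 + \<phi>2)" by (rule sk_antisym)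
  also have "\<dots> = - (sk \<psi> \<phi>1 + sk \<psi> \<phi>2)" by (simp only: sk_add2)
  also have "\<dots> = sk \<phi>1 \<psi> + sk \<phi>2 \<psi>" using sk_antisym[of \<psi> \<phi>1] sk_antisym[of \<psi> \<phi>2] by simp
  finally show ?thesis .
qed

lemma sk_smult1: "sk (smult c \<phi>) \<psi> = c * sk \<phi> \<psi>"
proof -
  have "sk (smult c \<phi>) \<psi> = - sk \<psi> (smult c \<phi>)" by (rule sk_antisym)
  also have "\<dots> = - (c * sk \<psi> \<phi>)" by (simp only: sk_smult2)
  also have "\<dots> = c * sk \<phi> \<psi>" using sk_antisym[of \<psi> \<phi>] by simp
  finally show ?thesis .
qed

lemma sk_zero2: "sk \<phi> 0 = 0"
  using sk_smult2[of \<phi> 0 0] by simp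

lemma sk_sum2: "sk \<phi> (\<Sum>k\<in>K. P k) = (\<Sum>k\<in>K. sk \<phi> (P k))"
  by (induction K rule: infinite_finite_induct) (simp_all add: sk_zero2 sk_add2)

lemma sk_sum1: "sk (\<Sum>k\<in>K. P k) \<psi> = (\<Sum>k\<in>K. sk (P k) \<psi>)"
proof -
  have z: "sk 0 \<psi> = 0" using sk_smult1[of 0 0 \<psi>] by simp
  show ?thesis by (induction K rule: infinite_finite_induct) (simp_all add: sk_add1 z)
qed

end

lemma lin_vanish:
  fixes \<Lambda> :: "real poly \<Rightarrow> real" and p :: "nat \<Rightarrow> real poly"
  assumes add: "\<And>a b. \<Lambda> (a + b) = \<Lambda> a + \<Lambda> b" and sm: "\<And>c a. \<Lambda> (smult c a) = c * \<Lambda> a"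
    and pm: "\<And>n. degree (p n) = n \<and> lead_coeff (p n) = 1"
    and z: "\<And>k. k < K \<Longrightarrow> \<Lambda> (p k) = 0"
  shows "\<forall>r. (\<forall>i\<ge>k. coeff r i = 0) \<longrightarrow> k \<le> K \<longrightarrow> \<Lambda> r = 0"
proof (induction k)
  case 0
  show ?case
  proof (intro allI impI)
    fix r :: "real poly" assume "\<forall>i\<ge>0. coeff r i = 0"
    then have "r = 0" by (intro poly_eqI) simp
    then show "\<Lambda> r = 0" using sm[of 0 0] by simp
  qed
next
  case (Suc k)
  show ?case
  proof (intro allI impI)
    fix r :: "real poly" assume r: "\<forall>i\<ge>Suc k. coeff r i = 0" and kK: "Suc k \<le> K"
    define r' where "r' = r - smult (coeff r k) (p k)"
    have "\<forall>i\<ge>k. coeff r' i = 0"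
    proof (intro allI impI)
      fix i assume "k \<le> i"
      show "coeff r' i = 0"
      proof (cases "i = k")
        case True
        have "coeff (p k) k = 1" using pm[of k] by metis
        then show ?thesis unfolding r'_def using True by simp
      next
        case False
        then have "i > degree (p k)" using \<open>k \<le> i\<close> pm[of k] by simp
        then have "coeff (p k) i = 0" by (rule coeff_eq_0)
        then show ?thesis unfolding r'_def using r False \<open>k \<le> i\<close> by simp
      qed
    qed
    then have "\<Lambda> r' = 0" using Suc kK by simp
    moreover have "r = r' + smult (coeff r k) (p k)" unfolding r'_def by simp
    then have "\<Lambda> r = \<Lambda> (r' + smult (coeff r k) (p k))" by (rule arg_cong)
    then have "\<Lambda> r = \<Lambda> r' + coeff r k * \<Lambda> (p k)" by (simp only: add sm)
    ultimately show "\<Lambda> r = 0" using z[of k] kK by simp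
  qed
qed

lemma lin_vanish_deg:
  fixes \<Lambda> :: "real poly \<Rightarrow> real" and p :: "nat \<Rightarrow> real poly"
  assumes add: "\<And>a b. \<Lambda> (a + b) = \<Lambda> a + \<Lambda> b" and sm: "\<And>c a. \<Lambda> (smult c a) = c * \<Lambda> a"
    and pm: "\<And>n. degree (p n) = n \<and> lead_coeff (p n) = 1"
    and z: "\<And>k. k < K \<Longrightarrow> \<Lambda> (p k) = 0"
    and r: "degree r < K"
  shows "\<Lambda> r = 0"
proof -
  have "\<forall>i\<ge>K. coeff r i = 0" using r by (auto intro: coeff_eq_0)
  then show ?thesis using lin_vanish[OF add sm pm z, of K] by blast
qed

locale qorth = qset +
  fixes p :: "nat \<Rightarrow> real poly" and h :: "nat \<Rightarrow> real"
  assumes p_monic: "\<And>n. degree (p n) = n \<and> lead_coeff (p n) = 1"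
    and p_orth: "\<And>m n. jint q I (\<lambda>x. poly (p m) x * poly (p n) x * \<rho> x) = (if m = n then h n else 0)"
begin

lemma J_pp: "J (p m * p n) = (if m = n then h n else 0)"
  unfolding J_def using p_orth by simp

lemma orth_lower: "degree r < m \<Longrightarrow> J (p m * r) = 0"
  by (rule lin_vanish_deg[where \<Lambda>="\<lambda>r. J (p m * r)", OF _ _ p_monic])
     (simp_all add: distrib_left J_add J_smult J_pp)

lemma tri_up: "n > Suc m \<Longrightarrow> sk (p m) (p n) = 0"
proof -
  assume n: "n > Suc m"
  obtain R where R: "degree R \<le> degree (p m) + 1" "\<And>\<psi>. sk (p m) \<psi> = - J (\<psi> * R)" using sk_J by blast
  have "degree R < n" using R(1) n p_monic[of m] by simp
  then show ?thesis using R(2) orth_lower by simp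
qed

lemma tri: "sk (p m) (p n) = 0" if "n \<noteq> Suc m" "m \<noteq> Suc n"
proof (cases "m = n")
  case True then show ?thesis by (simp add: sk_self)
next
  case False
  then have "n > Suc m \<or> m > Suc n" using that by linarith
  then show ?thesis using tri_up sk_antisym[of "p m" "p n"] by auto
qed

lemma c_sk: "ccoef q I f g \<rho> p n = sk (p n) (p (Suc n))"
  unfolding ccoef_def sk_def K by simp

lemma vanish_top:
  assumes N: "N \<ge> 1" and c0: "sk (p (N - 1)) (p N) = 0" and r: "degree r \<le> N"
  shows "sk (p N) r = 0"
proof (rule lin_vanish_deg[where \<Lambda>="sk (p N)", OF sk_add2 sk_smult2 p_monic])
  show "degree r < Suc N" using r by simp
  fix k assume k: "k < Suc N"
  show "sk (p N) (p k) = 0"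
  proof (cases "k = N - 1")
    case True
    then have "sk (p N) (p k) = - sk (p (N-1)) (p N)" using sk_antisym[of "p N" "p (N-1)"] by simp
    then show ?thesis using c0 by simp
  next
    case False
    then show ?thesis using k N by (intro tri) auto
  qed
qed

end



lemma pf_swap_zero:
  fixes A :: "nat \<Rightarrow> nat \<Rightarrow> real" and n b N :: nat
  assumes bS: "b < 2*n" and NS: "N < 2*n" and bN: "b \<noteq> N"
  defines "gb \<equiv> (\<lambda>k. if k = N then b else k)"
  shows "(\<Sum>\<sigma> | \<sigma> permutes {..<2*n}. of_int (sign \<sigma>) * (\<Prod>i<n. A (gb (\<sigma> (2*i))) (gb (\<sigma> (2*i+1))))) = 0"
proof -
  define S where "S = {..<2*n}"
  define P where "P = {\<sigma>. \<sigma> permutes S}"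
  define \<tau> where "\<tau> = Transposition.transpose b N"
  define T where "T = (\<lambda>\<sigma>. (\<Prod>i<n. A (gb (\<sigma> (2*i))) (gb (\<sigma> (2*i+1)))))"
  have \<tau>S: "\<tau> permutes S" unfolding \<tau>_def S_def using bS NS by (intro permutes_swap_id) auto
  have g\<tau>: "gb (\<tau> k) = gb k" for k
    unfolding gb_def \<tau>_def using bN by (cases "k = b"; cases "k = N") auto
  have T\<tau>: "T (\<tau> \<circ> \<sigma>) = T \<sigma>" for \<sigma> unfolding T_def by (simp add: g\<tau>)
  have sgn: "sign (\<tau> \<circ> \<sigma>) = - sign \<sigma>" if "\<sigma> \<in> P" for \<sigma>
  proof -
    have "permutation \<tau>" using \<tau>S permutes_imp_permutation[of S] unfolding S_def by auto
    moreover have "permutation \<sigma>" using that permutes_imp_permutation[of S] unfolding P_def S_def by auto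
    ultimately have "sign (\<tau> \<circ> \<sigma>) = sign \<tau> * sign \<sigma>" by (rule sign_compose)
    then show ?thesis unfolding \<tau>_def using bN by (simp add: sign_swap_id)
  qed
  have "(\<Sum>\<sigma>\<in>P. of_int (sign \<sigma>) * T \<sigma>) = (\<Sum>\<sigma>\<in>P. of_int (sign (\<tau> \<circ> \<sigma>)) * T (\<tau> \<circ> \<sigma>))"
  proof -
    have inv: "\<tau> \<circ> (\<tau> \<circ> \<sigma>) = \<sigma>" for \<sigma> unfolding \<tau>_def by (rule ext) simp
    have mem: "\<tau> \<circ> \<sigma> \<in> P" if "\<sigma> \<in> P" for \<sigma> using that \<tau>S permutes_compose unfolding P_def by blast
    show ?thesis
      by (rule sum.reindex_bij_witness[where i="\<lambda>\<sigma>. \<tau> \<circ> \<sigma>" and j="\<lambda>\<sigma>. \<tau> \<circ> \<sigma>"]) (auto simp: inv mem)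
  qed
  also have "\<dots> = - (\<Sum>\<sigma>\<in>P. of_int (sign \<sigma>) * T \<sigma>)"
    by (simp add: sgn T\<tau> sum_negf[symmetric])
  finally have "(\<Sum>\<sigma>\<in>P. of_int (sign \<sigma>) * T \<sigma>) = 0" by simp
  then show ?thesis unfolding P_def S_def T_def by simp
qed

lemma pf_row_zero:
  fixes A :: "nat \<Rightarrow> nat \<Rightarrow> real" and v :: "nat \<Rightarrow> real" and n :: nat and \<sigma> :: "nat \<Rightarrow> nat"
  assumes n: "n \<ge> 1" and \<sigma>: "\<sigma> permutes {..<2*n}"
    and r1: "\<And>a. a < 2*n \<Longrightarrow> (\<Sum>b<2*n. v b * A b a) = 0"
    and r2: "\<And>a. a < 2*n \<Longrightarrow> (\<Sum>b<2*n. v b * A a b) = 0"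
  shows "(\<Sum>b<2*n. v b * (\<Prod>i<n. A ((\<lambda>k. if k = 2*n-1 then b else k) (\<sigma> (2*i)))
                                     ((\<lambda>k. if k = 2*n-1 then b else k) (\<sigma> (2*i+1))))) = 0"
proof -
  define N where "N = 2*n - 1"
  define g where "g = (\<lambda>b k. if k = N then b else (k::nat))"
  have NS: "N < 2*n" unfolding N_def using n by simp
  obtain m where m: "m < 2*n" "\<sigma> m = N"
    using permutes_image[OF \<sigma>] NS by (metis imageE lessThan_iff)
  define i0 where "i0 = m div 2"
  have i0n: "i0 < n" unfolding i0_def using m(1) by simp
  have injs: "inj \<sigma>" by (rule permutes_inj[OF \<sigma>])
  have other: "\<sigma> (2*i) \<noteq> N \<and> \<sigma> (2*i+1) \<noteq> N" if "i \<noteq> i0" for i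
  proof -
    have "2*i \<noteq> m" "2*i+1 \<noteq> m" using that unfolding i0_def by auto
    then show ?thesis using injs m(2) by (metis injD)
  qed
  define Rest where "Rest = (\<Prod>i\<in>{..<n} - {i0}. A (\<sigma> (2*i)) (\<sigma> (2*i+1)))"
  have split: "(\<Prod>i<n. A (g b (\<sigma> (2*i))) (g b (\<sigma> (2*i+1))))
      = A (g b (\<sigma> (2*i0))) (g b (\<sigma> (2*i0+1))) * Rest" for b
  proof -
    have "(\<Prod>i<n. A (g b (\<sigma> (2*i))) (g b (\<sigma> (2*i+1))))
       = A (g b (\<sigma> (2*i0))) (g b (\<sigma> (2*i0+1))) * (\<Prod>i\<in>{..<n} - {i0}. A (g b (\<sigma> (2*i))) (g b (\<sigma> (2*i+1))))"
      using i0n by (subst prod.remove[of _ i0]) auto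
    also have "(\<Prod>i\<in>{..<n} - {i0}. A (g b (\<sigma> (2*i))) (g b (\<sigma> (2*i+1)))) = Rest"
      unfolding Rest_def using other by (intro prod.cong) (auto simp: g_def)
    finally show ?thesis .
  qed
  have key: "(\<Sum>b<2*n. v b * A (g b (\<sigma> (2*i0))) (g b (\<sigma> (2*i0+1)))) = 0"
  proof (cases "even m")
    case True
    then have "m = 2*i0" unfolding i0_def by simp
    then have s1: "\<sigma> (2*i0) = N" using m by simp
    have "2*i0+1 \<noteq> m" using \<open>m = 2*i0\<close> by simp
    then have s2: "\<sigma> (2*i0+1) \<noteq> N" using injs m(2) by (metis injD)
    have "2*i0+1 < 2*n" using i0n by simp
    then have y: "\<sigma> (2*i0+1) < 2*n" using permutes_in_image[OF \<sigma>] by simp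
    show ?thesis using r1[OF y] s1 s2 unfolding g_def by simp
  next
    case False
    then have "m = 2*i0+1" unfolding i0_def by simp
    then have s1: "\<sigma> (2*i0+1) = N" using m by simp
    have "2*i0 \<noteq> m" using \<open>m = 2*i0+1\<close> by simp
    then have s2: "\<sigma> (2*i0) \<noteq> N" using injs m(2) by (metis injD)
    have "2*i0 < 2*n" using i0n by simp
    then have y: "\<sigma> (2*i0) < 2*n" using permutes_in_image[OF \<sigma>] by simp
    show ?thesis using r2[OF y] s1 s2 unfolding g_def by simp
  qed
  have "(\<Sum>b<2*n. v b * (\<Prod>i<n. A (g b (\<sigma> (2*i))) (g b (\<sigma> (2*i+1)))))
      = (\<Sum>b<2*n. v b * A (g b (\<sigma> (2*i0))) (g b (\<sigma> (2*i0+1)))) * Rest"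
    unfolding split by (simp add: sum_distrib_right mult.assoc)
  also have "\<dots> = 0" using key by simp
  finally show ?thesis unfolding g_def N_def .
qed


lemma pf_zero:
  fixes A :: "nat \<Rightarrow> nat \<Rightarrow> real" and v :: "nat \<Rightarrow> real" and n :: nat
  assumes n: "n \<ge> 1" and vN: "v (2*n-1) = 1"
    and r1: "\<And>a. a < 2*n \<Longrightarrow> (\<Sum>b<2*n. v b * A b a) = 0"
    and r2: "\<And>a. a < 2*n \<Longrightarrow> (\<Sum>b<2*n. v b * A a b) = 0"
  shows "pfaffian A n = 0"
proof -
  define N where "N = 2*n - 1"
  define P where "P = {\<sigma>. \<sigma> permutes {..<2*n}}"
  define T where "T = (\<lambda>b \<sigma>. \<Prod>i<n. A ((\<lambda>k. if k = N then b else k) (\<sigma> (2*i)))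
                                     ((\<lambda>k. if k = N then b else k) (\<sigma> (2*i+1))))"
  have NS: "N < 2*n" unfolding N_def using n by simp
  have TN: "T N \<sigma> = (\<Prod>i<n. A (\<sigma> (2*i)) (\<sigma> (2*i+1)))" for \<sigma>
    unfolding T_def by (intro prod.cong) auto
  have rowz: "(\<Sum>b<2*n. v b * T b \<sigma>) = 0" if "\<sigma> \<in> P" for \<sigma>
    using pf_row_zero[OF n _ r1 r2, of \<sigma>] that unfolding P_def T_def N_def by simp
  have sp: "(\<Sum>b<2*n. v b * T b \<sigma>) = T N \<sigma> + (\<Sum>b\<in>{..<2*n} - {N}. v b * T b \<sigma>)" for \<sigma>
    using NS vN unfolding N_def[symmetric] by (subst sum.remove[of _ N]) auto
  have TN': "T N \<sigma> = - (\<Sum>b\<in>{..<2*n} - {N}. v b * T b \<sigma>)" if "\<sigma> \<in> P" for \<sigma>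
    using rowz[OF that] sp[of \<sigma>] by linarith
  have swz: "(\<Sum>\<sigma>\<in>P. of_int (sign \<sigma>) * T b \<sigma>) = 0" if "b \<in> {..<2*n} - {N}" for b
    using pf_swap_zero[of b n N A] that NS unfolding P_def T_def by auto
  have "(\<Sum>\<sigma>\<in>P. of_int (sign \<sigma>) * T N \<sigma>) = (\<Sum>\<sigma>\<in>P. - (\<Sum>b\<in>{..<2*n} - {N}. v b * (of_int (sign \<sigma>) * T b \<sigma>)))"
    by (intro sum.cong) (auto simp: TN' sum_distrib_left algebra_simps)
  also have "\<dots> = - (\<Sum>b\<in>{..<2*n} - {N}. v b * (\<Sum>\<sigma>\<in>P. of_int (sign \<sigma>) * T b \<sigma>))"
    by (simp add: sum_negf sum_distrib_left sum.swap[of _ P])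
  also have "\<dots> = 0" using swz by simp
  finally have "(\<Sum>\<sigma>\<in>P. of_int (sign \<sigma>) * T N \<sigma>) = 0" .
  then show ?thesis unfolding pfaffian_def P_def TN atLeast0LessThan by simp
qed



lemma smult_sum_right: "smult a (\<Sum>i\<in>A. P i) = (\<Sum>i\<in>A. smult a (P i))"
  by (induction A rule: infinite_finite_induct) (simp_all add: smult_add_right)

lemma Q_even: "Qpoly c p (2*n) = (\<Sum>l\<le>n. smult (\<Prod>j\<in>{l..<n}. c (2*j+1) / c (2*j)) (p (2*l)))"
  unfolding Qpoly_def by simp

lemma Q_odd: "Qpoly c p (2*n+1) = p (2*n+1)"
  unfolding Qpoly_def by simp

lemma Q_step:
  "Qpoly c p (2*Suc k) - smult (c (2*k+1) / c (2*k)) (Qpoly c p (2*k)) = p (2*Suc k)"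
proof -
  define r where "r = (\<lambda>j. c (2*j+1) / c (2*j))"
  have C: "(\<Prod>j\<in>{l..<Suc k}. r j) = (\<Prod>j\<in>{l..<k}. r j) * r k" if "l \<le> k" for l
    using that by (rule prod.atLeastLessThan_Suc)
  have "Qpoly c p (2*Suc k) = (\<Sum>l\<le>Suc k. smult (\<Prod>j\<in>{l..<Suc k}. r j) (p (2*l)))"
    unfolding Q_even r_def ..
  also have "\<dots> = (\<Sum>l\<le>k. smult (\<Prod>j\<in>{l..<Suc k}. r j) (p (2*l))) + p (2*Suc k)"
    by simp
  also have "(\<Sum>l\<le>k. smult (\<Prod>j\<in>{l..<Suc k}. r j) (p (2*l))) = (\<Sum>l\<le>k. smult (r k) (smult (\<Prod>j\<in>{l..<k}. r j) (p (2*l))))"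
    by (intro sum.cong) (simp_all add: C mult.commute)
  also have "\<dots> = smult (r k) (Qpoly c p (2*k))"
    unfolding Q_even r_def smult_sum_right ..
  finally show ?thesis unfolding r_def by simp
qed

lemma Q_monic:
  assumes pm: "\<And>n. degree (p n) = n \<and> lead_coeff (p n) = 1"
  shows "degree (Qpoly c p k) = k \<and> lead_coeff (Qpoly c p k) = 1"
proof (cases "odd k")
  case True
  have "coeff (p k) k = 1" using pm[of k] by metis
  then show ?thesis unfolding Qpoly_def using pm True by simp
next
  case False
  then obtain m where k: "k = 2*m" by (metis evenE)
  define Qm where "Qm = Qpoly c p (2*m)"
  have cf: "coeff Qm i = (\<Sum>l\<le>m. (\<Prod>j\<in>{l..<m}. c (2*j+1) / c (2*j)) * coeff (p (2*l)) i)" for i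
    unfolding Qm_def Q_even coeff_sum by simp
  have hi: "coeff Qm i = 0" if "i > 2*m" for i
  proof -
    have "coeff (p (2*l)) i = 0" if "l \<le> m" for l
      using \<open>i > 2*m\<close> that pm[of "2*l"] by (intro coeff_eq_0) simp
    then show ?thesis unfolding cf by simp
  qed
  have top: "coeff Qm (2*m) = 1"
  proof -
    have "coeff (p (2*l)) (2*m) = (if l = m then 1 else 0)" if "l \<le> m" for l
    proof (cases "l = m")
      case True then show ?thesis using pm[of "2*m"] by metis
    next
      case False
      then have "2*m > degree (p (2*l))" using that pm[of "2*l"] by simp
      then show ?thesis using False coeff_eq_0 by simp
    qed
    then have "coeff Qm (2*m) = (\<Sum>l\<le>m. if l = m then 1 else 0)" unfolding cf
      by (intro sum.cong) simp_all
    then show ?thesis by simp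
  qed
  have "degree Qm \<le> 2*m" using hi by (intro degree_le) auto
  moreover have "2*m \<le> degree Qm" using top by (intro le_degree) simp
  ultimately have "degree Qm = 2*m" by simp
  then show ?thesis using top unfolding k Qm_def by simp
qed

lemma Q_alt:
  assumes nz: "\<And>j. c (2*j) \<noteq> 0" "\<And>j. c (2*j+1) \<noteq> 0"
  shows "Qpoly c p (2*n) = smult (\<Prod>j<n. c (2*j+1) / c (2*j))
            (\<Sum>l\<le>n. smult (\<Prod>j<l. c (2*j) / c (2*j+1)) (p (2*l)))"
proof -
  define r where "r = (\<lambda>j. c (2*j+1) / c (2*j))"
  have co: "(\<Prod>j<n. r j) * (\<Prod>j<l. c (2*j) / c (2*j+1)) = (\<Prod>j\<in>{l..<n}. r j)" if "l \<le> n" for l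
  proof -
    have "(\<Prod>j<n. r j) = (\<Prod>j<l. r j) * (\<Prod>j\<in>{l..<n}. r j)"
      using prod.atLeastLessThan_concat[of 0 l n r] that by (simp add: atLeast0LessThan)
    moreover have "(\<Prod>j<l. r j) * (\<Prod>j<l. c (2*j) / c (2*j+1)) = 1"
    proof -
      have "(\<Prod>j<l. r j) * (\<Prod>j<l. c (2*j) / c (2*j+1)) = (\<Prod>j<l. r j * (c (2*j) / c (2*j+1)))"
        by (rule prod.distrib[symmetric])
      also have "\<dots> = (\<Prod>j<l. 1)" unfolding r_def using nz by (intro prod.cong) auto
      finally show ?thesis by simp
    qed
    ultimately show ?thesis by (simp add: algebra_simps)
  qed
  show ?thesis
    unfolding Q_even smult_sum_right smult_smult r_def[symmetric]
    by (intro sum.cong) (simp_all add: co[symmetric])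
qed

lemma pfaff_to_sk:
  "(\<lambda>x. (x::real) ^ i) = poly (monom 1 i)"
  by (rule ext) (simp add: poly_monom)

context qorth
begin

abbreviation cc where "cc \<equiv> ccoef q I f g \<rho> p"

lemma sk_pp: "sk (p m) (p n) = (if n = Suc m then cc m else if m = Suc n then - cc n else 0)"
proof -
  have "sk (p m) (p (Suc m)) = cc m" by (simp add: c_sk)
  moreover have "sk (p (Suc n)) (p n) = - cc n" using sk_antisym[of "p (Suc n)" "p n"] by (simp add: c_sk)
  ultimately show ?thesis using tri[of n m] by auto
qed

lemma c_even_nz:
  assumes pf: "\<And>n. n \<ge> 1 \<Longrightarrow>
        pfaffian (\<lambda>i j. skew_ip q I (\<lambda>x. poly f (q * x) * \<rho> (q * x)) (\<lambda>x. x ^ i) (\<lambda>x. x ^ j)) n \<noteq> 0"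
  shows "cc (2*j) \<noteq> 0"
proof
  assume c0: "cc (2*j) = 0"
  define n where "n = Suc j"
  define N where "N = 2*j+1"
  have Nn: "2*n - 1 = N" "2*n = Suc N" unfolding n_def N_def by simp_all
  define M where "M = (\<lambda>i k. skew_ip q I (\<lambda>x. poly f (q * x) * \<rho> (q * x)) (\<lambda>x. x ^ i) (\<lambda>x. x ^ k))"
  have M: "M i k = sk (monom 1 i) (monom 1 k)" for i k
    unfolding M_def sk_def pfaff_to_sk ..
  have c0': "sk (p (N - 1)) (p N) = 0" using c0 c_sk[of "2*j"] unfolding N_def by simp
  have van: "sk (p N) r = 0" if "degree r \<le> N" for r
    using vanish_top[OF _ c0' that] unfolding N_def by simp
  define v where "v = (\<lambda>b. coeff (p N) b)"
  have "coeff (p N) N = 1" using p_monic[of N] by metis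
  then have vN: "v (2*n - 1) = 1" unfolding v_def by (simp only: Nn(1))
  have pN: "(\<Sum>b<2*n. smult (v b) (monom 1 b)) = p N"
    unfolding Nn lessThan_Suc_atMost v_def smult_monom using poly_as_sum_of_monoms'[of "p N" N] p_monic[of N] by simp
  have r1: "(\<Sum>b<2*n. v b * M b a) = 0" if "a < 2*n" for a
  proof -
    have "(\<Sum>b<2*n. v b * M b a) = sk (\<Sum>b<2*n. smult (v b) (monom 1 b)) (monom 1 a)"
      unfolding M sk_sum1 sk_smult1 ..
    also have "\<dots> = 0" unfolding pN using that Nn by (intro van) (simp add: degree_monom_eq)
    finally show ?thesis .
  qed
  have r2: "(\<Sum>b<2*n. v b * M a b) = 0" if "a < 2*n" for a
  proof -
    have "(\<Sum>b<2*n. v b * M a b) = sk (monom 1 a) (\<Sum>b<2*n. smult (v b) (monom 1 b))"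
      unfolding M sk_sum2 sk_smult2 ..
    also have "\<dots> = - sk (p N) (monom 1 a)" unfolding pN by (rule sk_antisym)
    also have "\<dots> = 0" using that Nn by (simp add: van degree_monom_eq)
    finally show ?thesis .
  qed
  have "pfaffian M n = 0" by (rule pf_zero[OF _ vN r1 r2]) (simp add: n_def)
  moreover have "pfaffian M n \<noteq> 0" unfolding M_def by (rule pf) (simp add: n_def)
  ultimately show False by simp
qed

end



context qorth
begin

lemma skQ_eo:
  assumes cnz: "\<And>j. cc (2*j) \<noteq> 0"
  shows "sk (Qpoly cc p (2*n)) (Qpoly cc p (2*m+1)) = (if n = m then cc (2*n) else 0)"
proof -
  define C where "C = (\<lambda>l. \<Prod>j\<in>{l..<n}. cc (2*j+1) / cc (2*j))"
  have pt: "C l * sk (p (2*l)) (p (2*m+1))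
      = (if l = m then C m * cc (2*m) else 0) + (if l = Suc m then - (C (Suc m) * cc (2*m+1)) else 0)" for l
  proof -
    have a: "(2*m+1 = Suc (2*l)) = (l = m)" by arith
    have b: "(2*l = Suc (2*m+1)) = (l = Suc m)" by arith
    show ?thesis unfolding sk_pp a b by auto
  qed
  have "sk (Qpoly cc p (2*n)) (Qpoly cc p (2*m+1)) = (\<Sum>l\<le>n. C l * sk (p (2*l)) (p (2*m+1)))"
    unfolding Q_even Q_odd sk_sum1 sk_smult1 C_def ..
  also have "\<dots> = (\<Sum>l\<le>n. (if l = m then C m * cc (2*m) else 0)) + (\<Sum>l\<le>n. (if l = Suc m then - (C (Suc m) * cc (2*m+1)) else 0))"
    unfolding pt sum.distrib ..
  also have "\<dots> = (if m \<le> n then C m * cc (2*m) else 0) + (if Suc m \<le> n then - (C (Suc m) * cc (2*m+1)) else 0)"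
    by simp
  also have "\<dots> = (if n = m then cc (2*n) else 0)"
  proof (cases "m < n")
    case True
    have "C m = cc (2*m+1) / cc (2*m) * C (Suc m)" unfolding C_def using True by (simp add: prod.atLeast_Suc_lessThan)
    then have "C m * cc (2*m) = C (Suc m) * cc (2*m+1)" using cnz[of m] by simp
    then show ?thesis using True by simp
  next
    case False
    then show ?thesis unfolding C_def by auto
  qed
  finally show ?thesis .
qed

lemma skQ_ee: "sk (Qpoly cc p (2*m)) (Qpoly cc p (2*n)) = 0"
proof -
  have z: "sk (p (2*l)) (p (2*k)) = 0" for l k
  proof -
    have "2*k \<noteq> Suc (2*l)" "2*l \<noteq> Suc (2*k)" by arith+
    then show ?thesis unfolding sk_pp by simp
  qed
  show ?thesis unfolding Q_even sk_sum1 sk_smult1 sk_sum2 sk_smult2 z by simp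
qed

lemma skQ_oo: "sk (Qpoly cc p (2*m+1)) (Qpoly cc p (2*n+1)) = 0"
proof -
  have "2*n+1 \<noteq> Suc (2*m+1)" "2*m+1 \<noteq> Suc (2*n+1)" by arith+
  then show ?thesis unfolding Q_odd sk_pp by simp
qed

end

theorem proposition4p6:
  fixes q :: real and I :: qinterval and \<rho> :: "real \<Rightarrow> real"
    and f g :: "real poly" and p :: "nat \<Rightarrow> real poly" and h :: "nat \<Rightarrow> real"
  assumes q: "0 < q" "q < 1"
    and I: "valid_qinterval I"
    and moments: "\<And>k::nat. jint_integrable q I (\<lambda>x. x ^ k * \<rho> x)"
    and degf: "degree f \<le> 2" and degg: "degree g \<le> 1"
    and pearson: "\<And>x. x \<in> qlattice q I \<Longrightarrow>
        \<rho> (q * x) * poly f (q * x) = \<rho> x * (poly f x - q powr (-1/2) * (1 - q) * x * poly g x)"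
    and ends: "vanishes_at_ends q I (\<lambda>x. poly f x * \<rho> x)"
    and p_monic: "\<And>n. degree (p n) = n \<and> lead_coeff (p n) = 1"
    and p_orth: "\<And>m n. jint q I (\<lambda>x. poly (p m) x * poly (p n) x * \<rho> x) = (if m = n then h n else 0)"
    and h_nz: "\<And>n. h n \<noteq> 0"
    and pf: "\<And>n. n \<ge> 1 \<Longrightarrow>
        pfaffian (\<lambda>i j. skew_ip q I (\<lambda>x. poly f (q * x) * \<rho> (q * x)) (\<lambda>x. x ^ i) (\<lambda>x. x ^ j)) n \<noteq> 0"
  defines "c \<equiv> ccoef q I f g \<rho> p"
    and "\<omega> \<equiv> \<lambda>x. poly f (q * x) * \<rho> (q * x)"
    and "Q \<equiv> Qpoly (ccoef q I f g \<rho> p) p"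
  shows "(\<forall>n. degree (Q n) = n \<and> lead_coeff (Q n) = 1)
    \<and> (\<forall>n m. skew_ip q I \<omega> (poly (Q (2*n))) (poly (Q (2*m+1))) = (if n = m then c (2*n) else 0)
           \<and> skew_ip q I \<omega> (poly (Q (2*m+1))) (poly (Q (2*n))) = - (if n = m then c (2*n) else 0))
    \<and> (\<forall>n m. skew_ip q I \<omega> (poly (Q (2*m))) (poly (Q (2*n))) = 0
           \<and> skew_ip q I \<omega> (poly (Q (2*m+1))) (poly (Q (2*n+1))) = 0)
    \<and> (\<forall>n. p (2*n+1) = Q (2*n+1))
    \<and> (\<forall>n\<ge>1. p (2*n) = Q (2*n) - smult (c (2*n-1) / c (2*n-2)) (Q (2*n-2)))
    \<and> ((\<forall>j. c (2*j+1) \<noteq> 0) \<longrightarrow> (\<forall>n. Q (2*n) =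
          smult (\<Prod>j<n. c (2*j+1) / c (2*j))
            (\<Sum>l\<le>n. smult (\<Prod>j<l. c (2*j) / c (2*j+1)) (p (2*l)))))"
proof -
  interpret qorth q I \<rho> f g p h
    by unfold_locales (fact q I moments degf degg pearson ends p_monic p_orth)+
  have cnz: "\<And>j. c (2*j) \<noteq> 0" unfolding c_def by (rule c_even_nz[OF pf])
  have skeq: "skew_ip q I \<omega> (poly a) (poly b) = sk a b" for a b unfolding \<omega>_def sk_def ..
  have P1: "\<forall>n. degree (Q n) = n \<and> lead_coeff (Q n) = 1"
    unfolding Q_def using Q_monic[OF p_monic] by blast
  have P2: "\<forall>n m. skew_ip q I \<omega> (poly (Q (2*n))) (poly (Q (2*m+1))) = (if n = m then c (2*n) else 0)
           \<and> skew_ip q I \<omega> (poly (Q (2*m+1))) (poly (Q (2*n))) = - (if n = m then c (2*n) else 0)"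
  proof (intro allI conjI)
    fix n m
    show "skew_ip q I \<omega> (poly (Q (2*n))) (poly (Q (2*m+1))) = (if n = m then c (2*n) else 0)"
      unfolding skeq Q_def c_def using skQ_eo cnz unfolding c_def by blast
    show "skew_ip q I \<omega> (poly (Q (2*m+1))) (poly (Q (2*n))) = - (if n = m then c (2*n) else 0)"
      unfolding skeq Q_def c_def using skQ_eo[of n m] cnz sk_antisym[of "Qpoly (ccoef q I f g \<rho> p) p (2*m+1)"]
      unfolding c_def by simp
  qed
  have P3: "\<forall>n m. skew_ip q I \<omega> (poly (Q (2*m))) (poly (Q (2*n))) = 0
           \<and> skew_ip q I \<omega> (poly (Q (2*m+1))) (poly (Q (2*n+1))) = 0"
    unfolding skeq Q_def using skQ_ee skQ_oo by blast
  have P4: "\<forall>n. p (2*n+1) = Q (2*n+1)" unfolding Q_def Q_odd by simp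
  have P5: "\<forall>n\<ge>1. p (2*n) = Q (2*n) - smult (c (2*n-1) / c (2*n-2)) (Q (2*n-2))"
  proof (intro allI impI)
    fix n :: nat assume "n \<ge> 1"
    then obtain k where k: "n = Suc k" by (cases n) auto
    have e: "2*n - 1 = 2*k+1" "2*n - 2 = 2*k" unfolding k by simp_all
    show "p (2*n) = Q (2*n) - smult (c (2*n-1) / c (2*n-2)) (Q (2*n-2))"
      unfolding e unfolding k Q_def c_def using Q_step[of "ccoef q I f g \<rho> p" p k] by simp
  qed
  have P6: "((\<forall>j. c (2*j+1) \<noteq> 0) \<longrightarrow> (\<forall>n. Q (2*n) =
          smult (\<Prod>j<n. c (2*j+1) / c (2*j))
            (\<Sum>l\<le>n. smult (\<Prod>j<l. c (2*j) / c (2*j+1)) (p (2*l)))))"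
    unfolding Q_def using Q_alt cnz unfolding c_def by blast
  show ?thesis using P1 P2 P3 P4 P5 P6 by blast
qed


end
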